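(* Let $n>1$, let $U$ be the purely odd $(0|n)$-dimensional standard $\mathfrak{gl}(n)$-module, $\mathfrak{g}_{-1}=U$, $\mathfrak{g}_0=\mathfrak{gl}(n)$ and $\hat{\mathfrak{g}}_0=\mathfrak{sl}(n)$ (so that $\mathfrak{g}_*(\mathfrak{g}_{-1},\mathfrak{g}_0)=\mathfrak{vect}(0|n)$ and $\mathfrak{g}_*(\mathfrak{g}_{-1},\hat{\mathfrak{g}}_0)=\mathfrak{svect}(0|n)$; this is the case $m=1$ of the standard $\mathbb{Z}$-grading of $\mathfrak{sl}(m|n)$). Then a) $H^{k,2}_{\mathfrak{g}_0}=0$ for every $k>0$; b) $H^{k,2}_{\hat{\mathfrak{g}}_0}=\Pi^n(\mathbb{C})\,\delta_{kn}$, i.e. $H^{n,2}_{\hat{\mathfrak{g}}_0}$ is the trivial one-dimensional $\mathfrak{sl}(n)$-module of parity $n \bmod 2$ and $H^{k,2}_{\hat{\mathfrak{g}}_0}=0$ for $k\neq n$, $k>0$.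
   Context: Cartan prolongation of $(\mathfrak{g}_{-1},\mathfrak{g}_0)$: $\mathfrak{g}_i=(\mathfrak{g}_{i-1}\otimes\mathfrak{g}_{-1}^* )\cap(\mathfrak{g}_{i-2}\otimes S^2\mathfrak{g}_{-1}^* )$ for $i\ge1$ (super-symmetric powers), $\mathfrak{g}_*=\bigoplus_{i\ge-1}\mathfrak{g}_i$. Spencer complex: $C^{k,s}_{\mathfrak{g}_0}=\mathfrak{g}_{k-s}\otimes\Lambda^s(\mathfrak{g}_{-1}^* )$ (super-exterior power) with differential $(\partial f)(g_1,\dots,g_{s+1})=\sum_i(-1)^i[f(g_1,\dots,\widehat{g_{s+1-i}},\dots,g_{s+1}),g_{s+1-i}]$ (signs by the sign rule); $H^{k,s}_{\mathfrak{g}_0}$ is its cohomology in bidegree $(k,s)$, similarly for $\hat{\mathfrak{g}}_0$. $\mathfrak{vect}(0|n)$ is the derivation algebra of the Grassmann algebra on $n$ generators, $\mathfrak{svect}(0|n)$ its divergence-free part. $\Pi$ is the change of parity functor. *)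

theory Defs
  imports Complex_Main
begin

text \<open>U = C^(0|n) purely odd, basis e_0..e_(n-1).
  An element of g_m (m >= -1), viewed as an element of U (x) (U^* )^(m+1), i.e. as a
  multilinear map U^(m+1) -> U, is a function T with T xs i = i-th coordinate of
  T(e_(xs!0), e_(xs!1), ...). The first argument is the outermost one:
  g_m is a subspace of Hom(g_(-1), g_(m-1)), and T(e_l) = (\<lambda>xs. T (l # xs)).\<close>

type_synonym tens = "nat list \<Rightarrow> nat \<Rightarrow> complex"
type_synonym cochain = "nat list \<Rightarrow> tens"

definition gl_alg :: "nat \<Rightarrow> tens set" where
  "gl_alg n = {T. \<forall>xs i. T xs i \<noteq> 0 \<longrightarrow> (\<exists>a. xs = [a] \<and> a < n) \<and> i < n}"

definition sl_alg :: "nat \<Rightarrow> tens set" where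
  "sl_alg n = {T \<in> gl_alg n. (\<Sum>a<n. T [a] a) = 0}"

text \<open>Cartan prolongation: prolong n G0 j is g_(j-1).
  g_(-1) = U, g_0 = G0, and g_i = (g_(i-1) (x) U^* ) \<inter> (g_(i-2) (x) S^2 U^* ) for i >= 1,
  super-symmetry in two odd arguments being antisymmetry.\<close>
fun prolong :: "nat \<Rightarrow> tens set \<Rightarrow> nat \<Rightarrow> tens set" where
  "prolong n G0 0 = {T. \<forall>xs i. T xs i \<noteq> 0 \<longrightarrow> xs = [] \<and> i < n}"
| "prolong n G0 (Suc 0) = G0"
| "prolong n G0 (Suc (Suc j)) =
     {T. (\<forall>xs i. T xs i \<noteq> 0 \<longrightarrow> xs \<noteq> [] \<and> hd xs < n)
       \<and> (\<forall>l<n. (\<lambda>xs. T (l # xs)) \<in> prolong n G0 (Suc j))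
       \<and> (\<forall>a b xs i. T (a # b # xs) i = - T (b # a # xs) i)}"

text \<open>Spencer cochains C^(k,s) = g_(k-s) (x) \<Lambda>^s(U^* ): s-linear maps on the odd space U,
  super-antisymmetric (= symmetric, since the arguments are odd), with values in g_(k-s).
  f ys is the value on (e_(ys!0), ..., e_(ys!(s-1))).\<close>
definition cochains :: "nat \<Rightarrow> tens set \<Rightarrow> nat \<Rightarrow> nat \<Rightarrow> cochain set" where
  "cochains n G0 k s =
    {f. (\<forall>ys. f ys \<noteq> (\<lambda>_ _. 0) \<longrightarrow> length ys = s \<and> (\<forall>y\<in>set ys. y < n))
      \<and> (\<forall>ys. f ys \<in> (if s \<le> k + 1 then prolong n G0 (k + 1 - s) else {\<lambda>_ _. 0}))
      \<and> (\<forall>ys zs a b. f (ys @ a # b # zs) = f (ys @ b # a # zs))}"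

text \<open>Spencer differential: (df)(g_1..g_(s+1)) = sum_j [f(.., g_j omitted, ..), g_j],
  where [T, e_l] = T(e_l) is the bracket of g_m with g_(-1) in the prolongation.\<close>
definition spencer_d :: "cochain \<Rightarrow> cochain" where
  "spencer_d f = (\<lambda>ys xs i. \<Sum>j<length ys. f (take j ys @ drop (Suc j) ys) ((ys ! j) # xs) i)"

definition cocycles :: "nat \<Rightarrow> tens set \<Rightarrow> nat \<Rightarrow> nat \<Rightarrow> cochain set" where
  "cocycles n G0 k s = {f \<in> cochains n G0 k s. spencer_d f = (\<lambda>_ _ _. 0)}"

definition coboundaries :: "nat \<Rightarrow> tens set \<Rightarrow> nat \<Rightarrow> nat \<Rightarrow> cochain set" where
  "coboundaries n G0 k s = spencer_d ` cochains n G0 k (s - 1)"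

definition spencer_H_zero :: "nat \<Rightarrow> tens set \<Rightarrow> nat \<Rightarrow> nat \<Rightarrow> bool" where
  "spencer_H_zero n G0 k s \<longleftrightarrow> cocycles n G0 k s \<subseteq> coboundaries n G0 k s"

definition spencer_H_dim1 :: "nat \<Rightarrow> tens set \<Rightarrow> nat \<Rightarrow> nat \<Rightarrow> bool" where
  "spencer_H_dim1 n G0 k s \<longleftrightarrow>
     (\<exists>z \<in> cocycles n G0 k s. z \<notin> coboundaries n G0 k s \<and>
        (\<forall>w \<in> cocycles n G0 k s. \<exists>c::complex.
            (\<lambda>ys xs i. w ys xs i - c * z ys xs i) \<in> coboundaries n G0 k s))"

text \<open>Action of X \<in> g_0 (matrix: X e_a = sum_i X [a] i e_i) on g_m (the bracket [X,T])
  and on cochains (X acts on values and, contragrediently, on arguments).\<close>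
definition tens_act :: "nat \<Rightarrow> tens \<Rightarrow> tens \<Rightarrow> tens" where
  "tens_act n X T = (\<lambda>xs i. (\<Sum>a<n. T xs a * X [a] i)
      - (\<Sum>j<length xs. \<Sum>b<n. X [xs ! j] b * T (xs[j := b]) i))"

definition cochain_act :: "nat \<Rightarrow> tens \<Rightarrow> cochain \<Rightarrow> cochain" where
  "cochain_act n X f = (\<lambda>ys xs i. tens_act n X (f ys) xs i
      - (\<Sum>j<length ys. \<Sum>b<n. X [ys ! j] b * f (ys[j := b]) xs i))"

definition spencer_H_trivial :: "nat \<Rightarrow> tens set \<Rightarrow> nat \<Rightarrow> nat \<Rightarrow> bool" where
  "spencer_H_trivial n G0 k s \<longleftrightarrow>
     (\<forall>X \<in> G0. \<forall>w \<in> cocycles n G0 k s. cochain_act n X w \<in> coboundaries n G0 k s)"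

text \<open>Parity (0 even, 1 odd) of the homogeneous space C^(k,s) = g_(k-s) (x) \<Lambda>^s(U^* ):
  g_m \<subseteq> U (x) (U^* )^(m+1) with U odd has parity m+2 mod 2, \<Lambda>^s(U^* ) has parity s mod 2.\<close>
definition spencer_parity :: "nat \<Rightarrow> nat \<Rightarrow> nat" where
  "spencer_parity k s = ((1 + (k + 1 - s)) + s) mod 2"

end

theory Submission
  imports Defs
begin



definition alt :: "(nat list \<Rightarrow> complex) \<Rightarrow> bool" where
  "alt F \<longleftrightarrow> (\<forall>ys a b zs. F (ys @ a # b # zs) = - F (ys @ b # a # zs))"

definition del :: "nat \<Rightarrow> nat list \<Rightarrow> nat list" where
  "del j xs = take j xs @ drop (Suc j) xs"

lemma alt_tail: assumes "alt F" shows "alt (\<lambda>ys. F (c # ys))"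
  unfolding alt_def
proof (intro allI)
  fix ys a b zs
  show "F (c # ys @ a # b # zs) = - F (c # ys @ b # a # zs)"
    using assms[unfolded alt_def, rule_format, of "c # ys" a b zs] by simp
qed

lemma alt_head: assumes "alt F" shows "F (a # b # zs) = - F (b # a # zs)"
  using assms[unfolded alt_def, rule_format, of "[]" a b zs] by simp

lemma alt_same: "alt F \<Longrightarrow> F (a # a # zs) = 0"
  using alt_head[of F a a zs] by simp

lemma del_Cons_Suc[simp]: "del (Suc j) (x # xs) = x # del j xs"
  by (simp add: del_def)
lemma del_Cons_0[simp]: "del 0 (x # xs) = xs"
  by (simp add: del_def)
lemma length_del[simp]: "j < length xs \<Longrightarrow> length (del j xs) = length xs - 1"
  by (simp add: del_def)

lemma set_del: "j < length xs \<Longrightarrow> set xs = insert (xs ! j) (set (del j xs))"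
proof -
  assume j: "j < length xs"
  have "set xs = set (take j xs @ xs ! j # drop (Suc j) xs)" using id_take_nth_drop[OF j] by simp
  then show ?thesis unfolding del_def by simp
qed

lemma move_front: "alt F \<Longrightarrow> j < length xs \<Longrightarrow> F (xs ! j # del j xs) = (-1) ^ j * F xs"
proof (induction xs arbitrary: j F)
  case Nil then show ?case by simp
next
  case (Cons x xs)
  show ?case
  proof (cases j)
    case 0 then show ?thesis by simp
  next
    case (Suc j')
    have a: "alt (\<lambda>ys. F (x # ys))" by (rule alt_tail[OF Cons.prems(1)])
    have "F ((x # xs) ! j # del j (x # xs)) = F (xs ! j' # x # del j' xs)" using Suc by simp
    also have "\<dots> = - F (x # xs ! j' # del j' xs)" by (rule alt_head[OF Cons.prems(1)])
    also have "\<dots> = - ((-1) ^ j' * F (x # xs))" using Cons.IH[OF a, of j'] Cons.prems Suc by simp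
    finally show ?thesis using Suc by simp
  qed
qed

lemma dup_zero: "alt F \<Longrightarrow> \<not> distinct xs \<Longrightarrow> F xs = 0"
proof (induction xs arbitrary: F)
  case Nil then show ?case by simp
next
  case (Cons x xs)
  have a: "alt (\<lambda>ys. F (x # ys))" by (rule alt_tail[OF Cons.prems(1)])
  show ?case
  proof (cases "distinct xs")
    case False then show ?thesis using Cons.IH[OF a] by simp
  next
    case True
    then have "x \<in> set xs" using Cons.prems by simp
    then obtain j where j: "j < length xs" "xs ! j = x" by (metis in_set_conv_nth)
    have "F (x # xs ! j # del j xs) = (-1) ^ j * F (x # xs)" using move_front[OF a j(1)] .
    moreover have "F (x # xs ! j # del j xs) = 0" using j(2) alt_same[OF Cons.prems(1)] by simp
    ultimately show ?thesis by simp
  qed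
qed

definition Wf :: "(nat \<Rightarrow> nat list \<Rightarrow> complex) \<Rightarrow> nat list \<Rightarrow> complex" where
  "Wf u xs = (\<Sum>j<length xs. (-1) ^ j * u (xs ! j) (del j xs))"

lemma Wf_Nil[simp]: "Wf u [] = 0" by (simp add: Wf_def)

lemma Wf_Cons: "Wf u (a # ys) = u a ys - Wf (\<lambda>c r. u c (a # r)) ys"
  unfolding Wf_def length_Cons sum.lessThan_Suc_shift by (simp add: sum_negf)

lemma Wf_cong: "(\<And>c r. u c r = v c r) \<Longrightarrow> Wf u xs = Wf v xs"
  by (simp add: Wf_def)

lemma Wf_neg: "Wf (\<lambda>c r. - u c r) xs = - Wf u xs"
  by (simp add: Wf_def sum_negf)

lemma Wf_Cons2: "Wf u (a # b # zs) = u a (b # zs) - (u b (a # zs) - Wf (\<lambda>c r. u c (a # b # r)) zs)"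
  apply (subst Wf_Cons)
  apply (subst Wf_Cons)
  apply (rule refl)
  done

lemma Wf_alt: "(\<And>c. alt (u c)) \<Longrightarrow> alt (Wf u)"
proof -
  assume h: "\<And>c. alt (u c)"
  have key: "Wf u (ys @ a # b # zs) = - Wf u (ys @ b # a # zs)" for ys a b zs
    using h
  proof (induction ys arbitrary: u)
    case Nil
    have e: "Wf (\<lambda>c r. u c (a # b # r)) zs = - Wf (\<lambda>c r. u c (b # a # r)) zs"
    proof -
      have "Wf (\<lambda>c r. u c (a # b # r)) zs = Wf (\<lambda>c r. - u c (b # a # r)) zs"
        by (rule Wf_cong) (rule alt_head[OF Nil])
      then show ?thesis using Wf_neg[of "\<lambda>c r. u c (b # a # r)" zs] by simp
    qed
    show ?case unfolding append_Nil Wf_Cons2[of u a b] Wf_Cons2[of u b a] e by simp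
  next
    case (Cons y ys)
    have "\<And>c. alt (\<lambda>r. u c (y # r))" by (rule alt_tail[OF Cons.prems])
    then have i: "Wf (\<lambda>c r. u c (y # r)) (ys @ a # b # zs) = - Wf (\<lambda>c r. u c (y # r)) (ys @ b # a # zs)"
      by (rule Cons.IH)
    have ii: "u y (ys @ a # b # zs) = - u y (ys @ b # a # zs)" using Cons.prems[unfolded alt_def, rule_format, of y ys a b zs] by simp
    show ?case unfolding append_Cons Wf_Cons[of u y] i ii by simp
  qed
  show "alt (Wf u)" unfolding alt_def by (intro allI) (rule key)
qed


lemma alt_zero: "alt (\<lambda>_. 0)" by (simp add: alt_def)

lemma altD: "alt F \<Longrightarrow> F (ys @ a # b # zs) = - F (ys @ b # a # zs)"
  unfolding alt_def by blast

lemma alt_add: assumes "alt F" "alt G" shows "alt (\<lambda>xs. F xs + G xs)"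
  unfolding alt_def
proof (intro allI)
  fix ys a b zs
  show "F (ys @ a # b # zs) + G (ys @ a # b # zs) = - (F (ys @ b # a # zs) + G (ys @ b # a # zs))"
    using altD[OF assms(1), of ys a b zs] altD[OF assms(2), of ys a b zs] by simp
qed

lemma alt_diff: assumes "alt F" "alt G" shows "alt (\<lambda>xs. F xs - G xs)"
  unfolding alt_def
proof (intro allI)
  fix ys a b zs
  show "F (ys @ a # b # zs) - G (ys @ a # b # zs) = - (F (ys @ b # a # zs) - G (ys @ b # a # zs))"
    using altD[OF assms(1), of ys a b zs] altD[OF assms(2), of ys a b zs] by simp
qed

lemma alt_scale: assumes "alt F" shows "alt (\<lambda>xs. c * F xs)"
  unfolding alt_def
proof (intro allI)
  fix ys a b zs
  show "c * F (ys @ a # b # zs) = - (c * F (ys @ b # a # zs))"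
    using altD[OF assms(1), of ys a b zs] by simp
qed

lemma alt_scale2: assumes "alt F" shows "alt (\<lambda>xs. F xs * c)"
  unfolding alt_def
proof (intro allI)
  fix ys a b zs
  show "F (ys @ a # b # zs) * c = - (F (ys @ b # a # zs) * c)"
    using altD[OF assms(1), of ys a b zs] by simp
qed

lemma alt_sum: assumes "\<And>a. a \<in> A \<Longrightarrow> alt (F a)" shows "alt (\<lambda>xs. \<Sum>a\<in>A. F a xs)"
  unfolding alt_def
proof (intro allI)
  fix ys a b zs
  show "(\<Sum>c\<in>A. F c (ys @ a # b # zs)) = - (\<Sum>c\<in>A. F c (ys @ b # a # zs))"
    unfolding sum_negf[symmetric] by (rule sum.cong) (auto intro: altD[OF assms])
qed

lemma alt_if: "alt F \<Longrightarrow> alt (\<lambda>xs. if P then F xs else 0)"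
  by (cases P) (simp_all add: alt_zero)

definition Af :: "nat \<Rightarrow> (nat \<Rightarrow> nat \<Rightarrow> complex) \<Rightarrow> (nat list \<Rightarrow> complex) \<Rightarrow> nat list \<Rightarrow> complex" where
  "Af n M F xs = (\<Sum>j<length xs. \<Sum>b<n. M (xs ! j) b * F (xs[j := b]))"

lemma Af_Cons: "Af n M F (a # ys) = (\<Sum>b<n. M a b * F (b # ys)) + Af n M (\<lambda>r. F (a # r)) ys"
  unfolding Af_def length_Cons sum.lessThan_Suc_shift by simp

lemma Af_cong: "(\<And>r. F r = G r) \<Longrightarrow> Af n M F xs = Af n M G xs"
  by (simp add: Af_def)

lemma Af_neg: "Af n M (\<lambda>r. - F r) xs = - Af n M F xs"
  by (simp add: Af_def sum_negf)

lemma Af_alt: "alt F \<Longrightarrow> alt (Af n M F)"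
proof -
  assume h: "alt F"
  have key: "Af n M F (ys @ a # b # zs) = - Af n M F (ys @ b # a # zs)" for ys a b zs
    using h
  proof (induction ys arbitrary: F)
    case Nil
    have e: "Af n M (\<lambda>r. F (a # b # r)) zs = - Af n M (\<lambda>r. F (b # a # r)) zs"
    proof -
      have "Af n M (\<lambda>r. F (a # b # r)) zs = Af n M (\<lambda>r. - F (b # a # r)) zs"
        by (rule Af_cong) (rule alt_head[OF Nil])
      then show ?thesis using Af_neg[of n M "\<lambda>r. F (b # a # r)" zs] by simp
    qed
    have s1: "(\<Sum>c<n. M a c * F (c # b # zs)) = - (\<Sum>c<n. M a c * F (b # c # zs))"
      unfolding sum_negf[symmetric]
    proof (rule sum.cong)
      fix c assume "c \<in> {..<n}"
      have "F (c # b # zs) = - F (b # c # zs)" by (rule alt_head[OF Nil])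
      then show "M a c * F (c # b # zs) = - (M a c * F (b # c # zs))" by simp
    qed simp
    have s2: "(\<Sum>c<n. M b c * F (a # c # zs)) = - (\<Sum>c<n. M b c * F (c # a # zs))"
      unfolding sum_negf[symmetric]
    proof (rule sum.cong)
      fix c assume "c \<in> {..<n}"
      have "F (a # c # zs) = - F (c # a # zs)" by (rule alt_head[OF Nil])
      then show "M b c * F (a # c # zs) = - (M b c * F (c # a # zs))" by simp
    qed simp
    have l: "Af n M F (a # b # zs) = (\<Sum>c<n. M a c * F (c # b # zs)) + ((\<Sum>c<n. M b c * F (a # c # zs)) + Af n M (\<lambda>r. F (a # b # r)) zs)"
      by (subst Af_Cons, subst Af_Cons, rule refl)
    have r: "Af n M F (b # a # zs) = (\<Sum>c<n. M b c * F (c # a # zs)) + ((\<Sum>c<n. M a c * F (b # c # zs)) + Af n M (\<lambda>r. F (b # a # r)) zs)"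
      by (subst Af_Cons, subst Af_Cons, rule refl)
    show ?case unfolding append_Nil l r s1 s2 e by simp
  next
    case (Cons y ys)
    have "alt (\<lambda>r. F (y # r))" by (rule alt_tail[OF Cons.prems])
    then have i: "Af n M (\<lambda>r. F (y # r)) (ys @ a # b # zs) = - Af n M (\<lambda>r. F (y # r)) (ys @ b # a # zs)"
      by (rule Cons.IH)
    have ii: "(\<Sum>c<n. M y c * F (c # ys @ a # b # zs)) = - (\<Sum>c<n. M y c * F (c # ys @ b # a # zs))"
      unfolding sum_negf[symmetric]
    proof (rule sum.cong)
      fix c assume "c \<in> {..<n}"
      have "F (c # ys @ a # b # zs) = - F (c # ys @ b # a # zs)"
        using Cons.prems[unfolded alt_def, rule_format, of "c # ys" a b zs] by simp
      then show "M y c * F (c # ys @ a # b # zs) = - (M y c * F (c # ys @ b # a # zs))" by simp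
    qed simp
    show ?case unfolding append_Cons Af_Cons[of n M F y] i ii by simp
  qed
  show "alt (Af n M F)" unfolding alt_def by (intro allI) (rule key)
qed

lemma insort_split: "\<exists>j \<le> length L. insort x L = take j L @ x # drop j L"
proof (induction L)
  case Nil then show ?case by simp
next
  case (Cons y L)
  show ?case
  proof (cases "x \<le> y")
    case True then show ?thesis by (intro exI[of _ 0]) simp
  next
    case False
    then obtain j where "j \<le> length L" "insort x L = take j L @ x # drop j L" using Cons by blast
    then show ?thesis using False by (intro exI[of _ "Suc j"]) simp
  qed
qed

lemma alt_sort_zero: "alt F \<Longrightarrow> F (sort xs) = 0 \<Longrightarrow> F xs = 0"
proof (induction xs arbitrary: F)
  case Nil then show ?case by simp
next
  case (Cons x xs)
  define L where "L = sort xs"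
  obtain j where j: "j \<le> length L" "insort x L = take j L @ x # drop j L" using insort_split by blast
  define M where "M = take j L @ x # drop j L"
  have jM: "j < length M" using j(1) by (simp add: M_def)
  have Mj: "M ! j = x" using j(1) by (simp add: M_def nth_append)
  have dM: "del j M = L" using j(1) by (simp add: M_def del_def)
  have "F M = 0" using Cons.prems(2) j(2) by (simp add: M_def L_def)
  then have "F (x # L) = 0" using move_front[OF Cons.prems(1) jM] Mj dM by simp
  then have "F (x # xs) = 0"
    using Cons.IH[OF alt_tail[OF Cons.prems(1)]] L_def by simp
  then show ?case .
qed

lemma top_form:
  assumes a: "alt F" and s: "\<And>xs. F xs \<noteq> 0 \<Longrightarrow> length xs = n \<and> (\<forall>x\<in>set xs. x < n)"
    and z: "F [0..<n] = 0"
  shows "F xs = 0"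
proof (rule ccontr)
  assume nz: "F xs \<noteq> 0"
  then have l: "length xs = n" and e: "\<forall>x\<in>set xs. x < n" using s by auto
  have d: "distinct xs" using dup_zero[OF a] nz by blast
  have c: "card (set xs) = n" using d l distinct_card by blast
  have sub: "set xs \<subseteq> {0..<n}" using e by auto
  have "set xs = {0..<n}" using card_subset_eq[OF _ sub] c by simp
  then have "sort xs = [0..<n]"
    using sorted_list_of_set_sort_remdups[of xs] distinct_remdups_id[OF d] sorted_list_of_set_range[of 0 n] by simp
  then have "F xs = 0" using alt_sort_zero[OF a, of xs] z by simp
  then show False using nz by simp
qed

fun volr :: "nat \<Rightarrow> nat \<Rightarrow> nat list \<Rightarrow> complex" where
  "volr 0 m = (\<lambda>xs. if xs = [] then 1 else 0)"
| "volr (Suc r) m = Wf (\<lambda>c ys. if c = m then volr r (Suc m) ys else 0)"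

lemma volr_alt: "alt (volr r m)"
proof (induction r arbitrary: m)
  case 0 then show ?case by (simp add: alt_def)
next
  case (Suc r)
  show ?case unfolding volr.simps by (rule Wf_alt) (rule alt_if[OF Suc.IH])
qed

lemma sum_nz: assumes "(\<Sum>j\<in>A. f j) \<noteq> (0::complex)" shows "\<exists>j\<in>A. f j \<noteq> 0"
proof (rule ccontr)
  assume "\<not> ?thesis"
  then have "\<forall>j\<in>A. f j = 0" by blast
  then have "(\<Sum>j\<in>A. f j) = 0" by (rule sum.neutral)
  with assms show False by simp
qed

lemma volr_supp: "volr r m xs \<noteq> 0 \<Longrightarrow> length xs = r \<and> (\<forall>x\<in>set xs. m \<le> x \<and> x < m + r)"
proof (induction r arbitrary: m xs)
  case 0 then show ?case by (simp split: if_splits)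
next
  case (Suc r)
  have "Wf (\<lambda>c ys. if c = m then volr r (Suc m) ys else 0) xs \<noteq> 0" using Suc.prems by simp
  then obtain j where j: "j < length xs" "(-1) ^ j * (if xs ! j = m then volr r (Suc m) (del j xs) else 0) \<noteq> 0"
    unfolding Wf_def using sum_nz[of "\<lambda>j. (-1) ^ j * (if xs ! j = m then volr r (Suc m) (del j xs) else 0)" "{..<length xs}"] by auto
  then have xj: "xs ! j = m" and v: "volr r (Suc m) (del j xs) \<noteq> 0" by (auto split: if_splits)
  from Suc.IH[OF v] have "length (del j xs) = r" "\<forall>x\<in>set (del j xs). Suc m \<le> x \<and> x < Suc m + r" by auto
  then show ?case using set_del[OF j(1)] j(1) xj by auto
qed

lemma volr_val: "volr r m [m..<m + r] = 1"
proof (induction r arbitrary: m)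
  case 0 then show ?case by simp
next
  case (Suc r)
  have u: "[m..<m + Suc r] = m # [Suc m..<Suc m + r]" by (simp add: upt_conv_Cons)
  have z: "Wf (\<lambda>c r'. if c = m then volr r (Suc m) (m # r') else 0) [Suc m..<Suc m + r] = 0"
    unfolding Wf_def
  proof (rule sum.neutral, intro ballI)
    fix j assume "j \<in> {..<length [Suc m..<Suc m + r]}"
    then have "j < r" by (simp only: length_upt lessThan_iff)
    then have "[Suc m..<Suc m + r] ! j = Suc m + j" using nth_upt[of "Suc m" j "Suc m + r"] by linarith
    then have "[Suc m..<Suc m + r] ! j \<noteq> m" by simp
    then show "(-1) ^ j * (if [Suc m..<Suc m + r] ! j = m then volr r (Suc m) (m # del j [Suc m..<Suc m + r]) else 0) = 0" by simp
  qed
  show ?case unfolding u volr.simps Wf_Cons using z Suc.IH[of "Suc m"] by simp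
qed

definition vol :: "nat \<Rightarrow> nat list \<Rightarrow> complex" where "vol n = volr n 0"

lemma vol_alt: "alt (vol n)" by (simp add: vol_def volr_alt)
lemma vol_supp: "vol n xs \<noteq> 0 \<Longrightarrow> length xs = n \<and> (\<forall>x\<in>set xs. x < n)"
  unfolding vol_def using volr_supp[of n 0 xs] by auto
lemma vol_val: "vol n [0..<n] = 1" unfolding vol_def using volr_val[of n 0] by simp




definition Pgl :: "nat \<Rightarrow> nat \<Rightarrow> tens set" where
  "Pgl n m = {T. (\<forall>xs i. T xs i \<noteq> 0 \<longrightarrow> length xs = m \<and> (\<forall>x\<in>set xs. x < n) \<and> i < n)
                \<and> (\<forall>i. alt (\<lambda>xs. T xs i))}"

definition Psl :: "nat \<Rightarrow> nat \<Rightarrow> tens set" where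
  "Psl n m = {T \<in> Pgl n m. \<forall>ys. (\<Sum>i<n. T (i # ys) i) = 0}"

lemma sum_neg_cong: "(\<And>i. i \<in> A \<Longrightarrow> f i = - g i) \<Longrightarrow> sum f A = - (sum g A :: complex)"
  by (simp add: sum_negf[symmetric])

lemma PglD: "T \<in> Pgl n m \<Longrightarrow> T xs i \<noteq> 0 \<Longrightarrow> length xs = m \<and> (\<forall>x\<in>set xs. x < n) \<and> i < n"
  unfolding Pgl_def by blast

lemma PglD_alt: "T \<in> Pgl n m \<Longrightarrow> alt (\<lambda>xs. T xs i)"
  unfolding Pgl_def by blast

lemma PglI: "(\<And>xs i. T xs i \<noteq> 0 \<Longrightarrow> length xs = m \<and> (\<forall>x\<in>set xs. x < n) \<and> i < n)
   \<Longrightarrow> (\<And>i. alt (\<lambda>xs. T xs i)) \<Longrightarrow> T \<in> Pgl n m"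
  unfolding Pgl_def by blast

lemma alt_lenI: "(\<And>xs. F xs \<noteq> 0 \<Longrightarrow> length xs < 2) \<Longrightarrow> alt F"
proof -
  assume h: "\<And>xs. F xs \<noteq> 0 \<Longrightarrow> length xs < 2"
  have "F (ys @ a # b # zs) = 0" "F (ys @ b # a # zs) = 0" for ys a b zs
    using h[of "ys @ a # b # zs"] h[of "ys @ b # a # zs"] by auto
  then show "alt F" unfolding alt_def by simp
qed

lemma prolong0: "prolong n G0 0 = Pgl n 0"
proof (intro set_eqI iffI)
  fix T assume "T \<in> prolong n G0 0"
  then have h: "\<And>xs i. T xs i \<noteq> 0 \<Longrightarrow> xs = [] \<and> i < n" by simp
  show "T \<in> Pgl n 0"
  proof (rule PglI)
    fix xs i assume "T xs i \<noteq> 0" then have "xs = [] \<and> i < n" using h by blast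
    then show "length xs = 0 \<and> (\<forall>x\<in>set xs. x < n) \<and> i < n" by simp
  next
    fix i show "alt (\<lambda>xs. T xs i)" by (rule alt_lenI) (use h in force)
  qed
next
  fix T assume "T \<in> Pgl n 0"
  then show "T \<in> prolong n G0 0" using PglD[of T n 0] by auto
qed

lemma Pgl_step: "{T. (\<forall>xs i. T xs i \<noteq> 0 \<longrightarrow> xs \<noteq> [] \<and> hd xs < n)
       \<and> (\<forall>l<n. (\<lambda>xs. T (l # xs)) \<in> Pgl n m)
       \<and> (\<forall>a b xs i. T (a # b # xs) i = - T (b # a # xs) i)} = Pgl n (Suc m)"
proof (intro set_eqI iffI)
  fix T assume "T \<in> {T. (\<forall>xs i. T xs i \<noteq> 0 \<longrightarrow> xs \<noteq> [] \<and> hd xs < n)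
       \<and> (\<forall>l<n. (\<lambda>xs. T (l # xs)) \<in> Pgl n m)
       \<and> (\<forall>a b xs i. T (a # b # xs) i = - T (b # a # xs) i)}"
  then have A: "(\<forall>xs i. T xs i \<noteq> 0 \<longrightarrow> xs \<noteq> [] \<and> hd xs < n)
       \<and> (\<forall>l<n. (\<lambda>xs. T (l # xs)) \<in> Pgl n m)
       \<and> (\<forall>a b xs i. T (a # b # xs) i = - T (b # a # xs) i)" by (rule CollectD)
  have s: "\<And>xs i. T xs i \<noteq> 0 \<Longrightarrow> xs \<noteq> [] \<and> hd xs < n" using conjunct1[OF A] by blast
  have sl: "\<And>l. l < n \<Longrightarrow> (\<lambda>xs. T (l # xs)) \<in> Pgl n m" using conjunct1[OF conjunct2[OF A]] by blast
  have ft: "\<And>a b xs i. T (a # b # xs) i = - T (b # a # xs) i" by (rule conjunct2[OF conjunct2[OF A], rule_format])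
  show "T \<in> Pgl n (Suc m)"
  proof (rule PglI)
    fix xs i assume nz: "T xs i \<noteq> 0"
    have "xs \<noteq> [] \<and> hd xs < n" using s[OF nz] .
    then obtain l r where xs: "xs = l # r" and l: "l < n" by (cases xs) auto
    have "T (l # r) i \<noteq> 0" using nz xs by simp
    then have "length r = m \<and> (\<forall>x\<in>set r. x < n) \<and> i < n" using PglD[OF sl[OF l], of r i] by simp
    then show "length xs = Suc m \<and> (\<forall>x\<in>set xs. x < n) \<and> i < n" using xs l by simp
  next
    fix i
    show "alt (\<lambda>xs. T xs i)" unfolding alt_def
    proof (intro allI)
      fix ys a b zs
      show "T (ys @ a # b # zs) i = - T (ys @ b # a # zs) i"
      proof (cases ys)
        case Nil then show ?thesis using ft[of a b zs i] by simp
      next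
        case (Cons y ys')
        show ?thesis
        proof (cases "y < n")
          case True
          have "alt (\<lambda>xs. T (y # xs) i)" using PglD_alt[OF sl[OF True]] by simp
          then show ?thesis using altD[of "\<lambda>xs. T (y # xs) i" ys' a b zs] Cons by simp
        next
          case False
          have "hd (ys @ a # b # zs) = y" "hd (ys @ b # a # zs) = y" using Cons by simp_all
          then have "T (ys @ a # b # zs) i = 0" "T (ys @ b # a # zs) i = 0"
            using s[of "ys @ a # b # zs" i] s[of "ys @ b # a # zs" i] False by auto
          then show ?thesis by simp
        qed
      qed
    qed
  qed
next
  fix T assume T: "T \<in> Pgl n (Suc m)"
  have s: "\<forall>xs i. T xs i \<noteq> 0 \<longrightarrow> xs \<noteq> [] \<and> hd xs < n"
  proof (intro allI impI)
    fix xs i assume "T xs i \<noteq> 0"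
    then have "length xs = Suc m \<and> (\<forall>x\<in>set xs. x < n)" using PglD[OF T] by blast
    then show "xs \<noteq> [] \<and> hd xs < n" by (cases xs) auto
  qed
  have sl: "\<forall>l<n. (\<lambda>xs. T (l # xs)) \<in> Pgl n m"
  proof (intro allI impI PglI)
    fix l xs i assume "T (l # xs) i \<noteq> 0"
    then show "length xs = m \<and> (\<forall>x\<in>set xs. x < n) \<and> i < n" using PglD[OF T] by fastforce
  next
    fix l i show "alt (\<lambda>xs. T (l # xs) i)" using alt_tail[OF PglD_alt[OF T, of i]] by simp
  qed
  have ft: "\<forall>a b xs i. T (a # b # xs) i = - T (b # a # xs) i"
  proof (intro allI)
    fix a b xs i show "T (a # b # xs) i = - T (b # a # xs) i"
      using alt_head[OF PglD_alt[OF T, of i], of a b xs] by simp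
  qed
  show "T \<in> {T. (\<forall>xs i. T xs i \<noteq> 0 \<longrightarrow> xs \<noteq> [] \<and> hd xs < n)
       \<and> (\<forall>l<n. (\<lambda>xs. T (l # xs)) \<in> Pgl n m)
       \<and> (\<forall>a b xs i. T (a # b # xs) i = - T (b # a # xs) i)}"
    unfolding mem_Collect_eq by (intro conjI; fact)
qed

lemma gl_Pgl: "gl_alg n = Pgl n 1"
proof (intro set_eqI iffI)
  fix T assume "T \<in> gl_alg n"
  then have h: "\<And>xs i. T xs i \<noteq> 0 \<Longrightarrow> (\<exists>a. xs = [a] \<and> a < n) \<and> i < n" unfolding gl_alg_def by blast
  show "T \<in> Pgl n 1"
  proof (rule PglI)
    fix xs i assume "T xs i \<noteq> 0" then show "length xs = 1 \<and> (\<forall>x\<in>set xs. x < n) \<and> i < n" using h by force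
  next
    fix i show "alt (\<lambda>xs. T xs i)" by (rule alt_lenI) (use h in force)
  qed
next
  fix T assume T: "T \<in> Pgl n 1"
  show "T \<in> gl_alg n" unfolding gl_alg_def
  proof (intro CollectI allI impI)
    fix xs i assume "T xs i \<noteq> 0"
    then have "length xs = 1 \<and> (\<forall>x\<in>set xs. x < n) \<and> i < n" using PglD[OF T] by blast
    then show "(\<exists>a. xs = [a] \<and> a < n) \<and> i < n" by (cases xs) auto
  qed
qed

lemma prolong_gl: "prolong n (gl_alg n) (Suc j) = Pgl n (Suc j)"
proof (induction j)
  case 0 then show ?case using gl_Pgl by simp
next
  case (Suc j)
  show ?case unfolding prolong.simps Suc.IH by (rule Pgl_step)
qed

lemma Psl_step: assumes m: "m \<ge> 1" shows "{T. (\<forall>xs i. T xs i \<noteq> 0 \<longrightarrow> xs \<noteq> [] \<and> hd xs < n)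
       \<and> (\<forall>l<n. (\<lambda>xs. T (l # xs)) \<in> Psl n m)
       \<and> (\<forall>a b xs i. T (a # b # xs) i = - T (b # a # xs) i)} = Psl n (Suc m)"
proof (intro set_eqI iffI)
  fix T assume "T \<in> {T. (\<forall>xs i. T xs i \<noteq> 0 \<longrightarrow> xs \<noteq> [] \<and> hd xs < n)
       \<and> (\<forall>l<n. (\<lambda>xs. T (l # xs)) \<in> Psl n m)
       \<and> (\<forall>a b xs i. T (a # b # xs) i = - T (b # a # xs) i)}"
  then have A: "(\<forall>xs i. T xs i \<noteq> 0 \<longrightarrow> xs \<noteq> [] \<and> hd xs < n)
       \<and> (\<forall>l<n. (\<lambda>xs. T (l # xs)) \<in> Psl n m)
       \<and> (\<forall>a b xs i. T (a # b # xs) i = - T (b # a # xs) i)" by (rule CollectD)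
  have s: "\<forall>xs i. T xs i \<noteq> 0 \<longrightarrow> xs \<noteq> [] \<and> hd xs < n" by (rule conjunct1[OF A])
  have sl: "\<And>l. l < n \<Longrightarrow> (\<lambda>xs. T (l # xs)) \<in> Psl n m" using conjunct1[OF conjunct2[OF A]] by blast
  have ft: "\<forall>a b xs i. T (a # b # xs) i = - T (b # a # xs) i" by (rule conjunct2[OF conjunct2[OF A]])
  have sl': "\<forall>l<n. (\<lambda>xs. T (l # xs)) \<in> Pgl n m" using sl unfolding Psl_def by blast
  have "T \<in> {T. (\<forall>xs i. T xs i \<noteq> 0 \<longrightarrow> xs \<noteq> [] \<and> hd xs < n)
       \<and> (\<forall>l<n. (\<lambda>xs. T (l # xs)) \<in> Pgl n m)
       \<and> (\<forall>a b xs i. T (a # b # xs) i = - T (b # a # xs) i)}"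
    unfolding mem_Collect_eq by (intro conjI; fact)
  then have TP: "T \<in> Pgl n (Suc m)" unfolding Pgl_step .
  have dv: "(\<Sum>i<n. T (i # ys) i) = 0" for ys
  proof (cases ys)
    case Nil
    have "T [i] i = 0" for i using PglD[OF TP, of "[i]" i] m by fastforce
    then show ?thesis using Nil by simp
  next
    case (Cons l r)
    have e: "T (i # l # r) i = - T (l # i # r) i" for i by (rule ft[rule_format])
    show ?thesis
    proof (cases "l < n")
      case True
      have "(\<Sum>i<n. T (l # i # r) i) = 0" using sl[OF True] unfolding Psl_def by blast
      moreover have "(\<Sum>i<n. T (i # l # r) i) = - (\<Sum>i<n. T (l # i # r) i)" by (rule sum_neg_cong) (rule e)
      ultimately show ?thesis using Cons by simp
    next
      case False
      have "T (i # l # r) i = 0" for i using PglD[OF TP, of "i # l # r" i] False by fastforce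
      then show ?thesis using Cons by simp
    qed
  qed
  show "T \<in> Psl n (Suc m)" unfolding Psl_def using TP dv by blast
next
  fix T assume T: "T \<in> Psl n (Suc m)"
  then have TP: "T \<in> Pgl n (Suc m)" and dv: "\<And>ys. (\<Sum>i<n. T (i # ys) i) = 0" unfolding Psl_def by auto
  have X: "T \<in> {T. (\<forall>xs i. T xs i \<noteq> 0 \<longrightarrow> xs \<noteq> [] \<and> hd xs < n)
       \<and> (\<forall>l<n. (\<lambda>xs. T (l # xs)) \<in> Pgl n m)
       \<and> (\<forall>a b xs i. T (a # b # xs) i = - T (b # a # xs) i)}" unfolding Pgl_step by (rule TP)
  then have A: "(\<forall>xs i. T xs i \<noteq> 0 \<longrightarrow> xs \<noteq> [] \<and> hd xs < n)
       \<and> (\<forall>l<n. (\<lambda>xs. T (l # xs)) \<in> Pgl n m)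
       \<and> (\<forall>a b xs i. T (a # b # xs) i = - T (b # a # xs) i)" by (rule CollectD)
  have s: "\<forall>xs i. T xs i \<noteq> 0 \<longrightarrow> xs \<noteq> [] \<and> hd xs < n" by (rule conjunct1[OF A])
  have sl: "\<forall>l<n. (\<lambda>xs. T (l # xs)) \<in> Pgl n m" by (rule conjunct1[OF conjunct2[OF A]])
  have ft: "\<forall>a b xs i. T (a # b # xs) i = - T (b # a # xs) i" by (rule conjunct2[OF conjunct2[OF A]])
  have sl2: "\<forall>l<n. (\<lambda>xs. T (l # xs)) \<in> Psl n m"
  proof (intro allI impI)
    fix l assume l: "l < n"
    have "(\<Sum>i<n. T (l # i # r) i) = 0" for r
    proof -
      have e: "T (l # i # r) i = - T (i # l # r) i" for i by (rule ft[rule_format])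
      have "(\<Sum>i<n. T (l # i # r) i) = - (\<Sum>i<n. T (i # l # r) i)" by (rule sum_neg_cong) (rule e)
      then show ?thesis using dv[of "l # r"] by simp
    qed
    then show "(\<lambda>xs. T (l # xs)) \<in> Psl n m" using sl l unfolding Psl_def by blast
  qed
  show "T \<in> {T. (\<forall>xs i. T xs i \<noteq> 0 \<longrightarrow> xs \<noteq> [] \<and> hd xs < n)
       \<and> (\<forall>l<n. (\<lambda>xs. T (l # xs)) \<in> Psl n m)
       \<and> (\<forall>a b xs i. T (a # b # xs) i = - T (b # a # xs) i)}"
    unfolding mem_Collect_eq by (intro conjI; fact)
qed

lemma sl_Psl: "sl_alg n = Psl n 1"
proof (intro set_eqI iffI)
  fix T assume T: "T \<in> sl_alg n"
  then have TP: "T \<in> Pgl n 1" and tr: "(\<Sum>a<n. T [a] a) = 0" using gl_Pgl unfolding sl_alg_def by auto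
  have "(\<Sum>i<n. T (i # ys) i) = 0" for ys
  proof (cases ys)
    case Nil then show ?thesis using tr by simp
  next
    case (Cons y r)
    have "T (i # ys) i = 0" for i using PglD[OF TP, of "i # ys" i] Cons by fastforce
    then show ?thesis by simp
  qed
  then show "T \<in> Psl n 1" unfolding Psl_def using TP by blast
next
  fix T assume "T \<in> Psl n 1"
  then have "T \<in> Pgl n 1" "(\<Sum>i<n. T (i # []) i) = 0" unfolding Psl_def by auto
  then show "T \<in> sl_alg n" unfolding sl_alg_def using gl_Pgl by auto
qed

lemma prolong_sl: "prolong n (sl_alg n) (Suc j) = Psl n (Suc j)"
proof (induction j)
  case 0 then show ?case using sl_Psl by simp
next
  case (Suc j)
  show ?case unfolding prolong.simps Suc.IH by (rule Psl_step) simp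
qed

lemma Psl_Pgl: "Psl n m \<subseteq> Pgl n m" unfolding Psl_def by blast




lemma fun_nz: "(f :: tens) \<noteq> (\<lambda>_ _. 0) \<longleftrightarrow> (\<exists>xs i. f xs i \<noteq> 0)"
  by (metis ext)

lemma coch1I:
  assumes k: "k > 0"
    and s: "\<And>ys xs i. f ys xs i \<noteq> 0 \<Longrightarrow> length ys = 1 \<and> (\<forall>y\<in>set ys. y < n)"
    and v: "\<And>ys. f ys \<in> prolong n G0 k"
  shows "f \<in> cochains n G0 k 1"
proof -
  have z: "f ys = (\<lambda>_ _. 0)" if "length ys \<noteq> 1" for ys
    using s that by (intro ext) blast
  have sym: "f (ys @ a # b # zs) = f (ys @ b # a # zs)" for ys a b zs
    using z[of "ys @ a # b # zs"] z[of "ys @ b # a # zs"] by simp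
  have s': "f ys \<noteq> (\<lambda>_ _. 0) \<longrightarrow> length ys = 1 \<and> (\<forall>y\<in>set ys. y < n)" for ys
    using s unfolding fun_nz by blast
  show ?thesis unfolding cochains_def using s' v sym k by simp
qed

lemma coch1D:
  assumes "f \<in> cochains n G0 k 1" "k > 0"
  shows "f ys xs i \<noteq> 0 \<Longrightarrow> length ys = 1 \<and> (\<forall>y\<in>set ys. y < n)"
    and "f ys \<in> prolong n G0 k"
proof -
  have a: "\<forall>ys. f ys \<noteq> (\<lambda>_ _. 0) \<longrightarrow> length ys = 1 \<and> (\<forall>y\<in>set ys. y < n)"
    and b: "\<forall>ys. f ys \<in> (if 1 \<le> k + 1 then prolong n G0 (k + 1 - 1) else {\<lambda>_ _. 0})"
    using assms(1) unfolding cochains_def by (blast, blast)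
  show "f ys xs i \<noteq> 0 \<Longrightarrow> length ys = 1 \<and> (\<forall>y\<in>set ys. y < n)"
    using a unfolding fun_nz by blast
  show "f ys \<in> prolong n G0 k" using b by simp
qed

lemma coch2I:
  assumes k: "k > 0"
    and s: "\<And>ys xs i. f ys xs i \<noteq> 0 \<Longrightarrow> length ys = 2 \<and> (\<forall>y\<in>set ys. y < n)"
    and v: "\<And>ys. f ys \<in> prolong n G0 (k - 1)"
    and sy: "\<And>a b. f [a, b] = f [b, a]"
  shows "f \<in> cochains n G0 k 2"
proof -
  have z: "f ys = (\<lambda>_ _. 0)" if "length ys \<noteq> 2" for ys
    using s that by (intro ext) blast
  have sym: "f (ys @ a # b # zs) = f (ys @ b # a # zs)" for ys a b zs
  proof (cases "ys = [] \<and> zs = []")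
    case True then show ?thesis using sy by simp
  next
    case False
    then have "length (ys @ a # b # zs) \<noteq> 2" "length (ys @ b # a # zs) \<noteq> 2" by auto
    then show ?thesis using z by simp
  qed
  have s': "f ys \<noteq> (\<lambda>_ _. 0) \<longrightarrow> length ys = 2 \<and> (\<forall>y\<in>set ys. y < n)" for ys
    using s unfolding fun_nz by blast
  have kk: "k + 1 - 2 = k - 1" by simp
  show ?thesis unfolding cochains_def kk using s' v sym k by simp
qed

lemma coch2D:
  assumes "f \<in> cochains n G0 k 2" "k > 0"
  shows "f ys xs i \<noteq> 0 \<Longrightarrow> length ys = 2 \<and> (\<forall>y\<in>set ys. y < n)"
    and "f ys \<in> prolong n G0 (k - 1)"
    and "f [a, b] = f [b, a]"
proof -
  have a: "\<forall>ys. f ys \<noteq> (\<lambda>_ _. 0) \<longrightarrow> length ys = 2 \<and> (\<forall>y\<in>set ys. y < n)"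
    and b: "\<forall>ys. f ys \<in> (if 2 \<le> k + 1 then prolong n G0 (k + 1 - 2) else {\<lambda>_ _. 0})"
    and c: "\<forall>ys zs a b. f (ys @ a # b # zs) = f (ys @ b # a # zs)"
    using assms(1) unfolding cochains_def by (blast, blast, blast)
  show "f ys xs i \<noteq> 0 \<Longrightarrow> length ys = 2 \<and> (\<forall>y\<in>set ys. y < n)"
    using a unfolding fun_nz by blast
  have kk: "k + 1 - 2 = k - 1" by simp
  show "f ys \<in> prolong n G0 (k - 1)" using b assms(2) unfolding kk by simp
  show "f [a, b] = f [b, a]" using c[rule_format, of "[]" a b "[]"] by simp
qed

lemma d_len1: "spencer_d g [a] xs i = g [] (a # xs) i"
  unfolding spencer_d_def by simp

lemma d_len2: "spencer_d g [a, b] xs i = g [b] (a # xs) i + g [a] (b # xs) i"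
  unfolding spencer_d_def by (simp add: numeral_2_eq_2 lessThan_Suc)

lemma d_len3: "spencer_d g [a, b, c] xs i = g [b, c] (a # xs) i + g [a, c] (b # xs) i + g [a, b] (c # xs) i"
  unfolding spencer_d_def by (simp add: numeral_3_eq_3 numeral_2_eq_2 lessThan_Suc)

lemma d_zero:
  assumes s: "\<And>ys xs i. g ys xs i \<noteq> 0 \<Longrightarrow> length ys = m" and l: "length ys \<noteq> Suc m"
  shows "spencer_d g ys xs i = 0"
  unfolding spencer_d_def
proof (rule sum.neutral, intro ballI)
  fix j assume "j \<in> {..<length ys}"
  then have "length (take j ys @ drop (Suc j) ys) = length ys - 1" by simp
  then have "length (take j ys @ drop (Suc j) ys) \<noteq> m" using l \<open>j \<in> {..<length ys}\<close> by auto
  then show "g (take j ys @ drop (Suc j) ys) (ys ! j # xs) i = 0" using s by blast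
qed

lemma d_lin: "spencer_d (\<lambda>ys xs i. g ys xs i + c * h ys xs i) ys xs i = spencer_d g ys xs i + c * spencer_d h ys xs i"
  unfolding spencer_d_def by (simp add: sum.distrib sum_distrib_left)

lemma Wf_add: "Wf (\<lambda>c r. u c r + v c r) xs = Wf u xs + Wf v xs"
  unfolding Wf_def by (simp add: sum.distrib algebra_simps)

lemma Wf_scale: "Wf (\<lambda>c r. t * u c r) xs = t * Wf u xs"
  unfolding Wf_def by (simp add: sum_distrib_left algebra_simps)

lemma Wf_front: assumes "alt F" shows "Wf (\<lambda>c r. F (c # r)) xs = of_nat (length xs) * F xs"
proof -
  have "Wf (\<lambda>c r. F (c # r)) xs = (\<Sum>j<length xs. F xs)"
    unfolding Wf_def
  proof (rule sum.cong)
    fix j assume "j \<in> {..<length xs}"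
    then have "F (xs ! j # del j xs) = (-1) ^ j * F xs" using move_front[OF assms] by simp
    then show "(-1) ^ j * F (xs ! j # del j xs) = F xs"
      by (simp add: power_mult_distrib[symmetric] mult.assoc[symmetric])
  qed simp
  then show ?thesis by simp
qed

lemma H1:
  assumes a: "\<And>c. alt (u c)" and c: "\<And>a b r. u b (a # r) + u a (b # r) = 0"
  shows "Wf u (a # ys) = of_nat (Suc (length ys)) * u a ys"
proof -
  have "Wf (\<lambda>c r. u c (a # r)) ys = Wf (\<lambda>c r. - u a (c # r)) ys"
  proof (rule Wf_cong)
    fix c r show "u c (a # r) = - u a (c # r)" using c[of a c r] by (simp add: eq_neg_iff_add_eq_0 add.commute)
  qed
  also have "\<dots> = - Wf (\<lambda>c r. u a (c # r)) ys" by (rule Wf_neg)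
  also have "\<dots> = - (of_nat (length ys) * u a ys)" using Wf_front[OF a[of a]] by simp
  finally show ?thesis unfolding Wf_Cons by (simp add: algebra_simps)
qed




lemma Wf_nz: "Wf u xs \<noteq> 0 \<Longrightarrow> \<exists>j<length xs. u (xs ! j) (del j xs) \<noteq> 0"
  unfolding Wf_def using sum_nz[of "\<lambda>j. (-1) ^ j * u (xs ! j) (del j xs)" "{..<length xs}"] by auto

lemma zero_Pgl: "(\<lambda>_ _. 0) \<in> Pgl n m"
  by (rule PglI) (simp_all add: alt_zero)

lemma zero_Psl: "(\<lambda>_ _. 0) \<in> Psl n m"
  unfolding Psl_def using zero_Pgl by simp

lemma del_len_set:
  assumes j: "j < length xs" and l: "length (del j xs) = m" and s: "\<forall>x\<in>set (del j xs). x < n" and x: "xs ! j < n"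
  shows "length xs = Suc m \<and> (\<forall>x\<in>set xs. x < n)"
  using j l s x set_del[OF j] by auto

definition hom2 :: "nat \<Rightarrow> cochain \<Rightarrow> cochain" where
  "hom2 k f = (\<lambda>ys xs i. if length ys = 1 then inverse (of_nat (k + 1)) * Wf (\<lambda>c r. f [hd ys, c] r i) xs else 0)"

lemma H2:
  assumes k: "k > 0" and f: "f \<in> cochains n G0 k 2" and cyc: "spencer_d f = (\<lambda>_ _ _. 0)"
    and P: "\<And>ys. f ys \<in> Pgl n (k - 1)"
  shows "hom2 k f \<in> cochains n (gl_alg n) k 1" and "spencer_d (hom2 k f) = f"
proof -
  have fs: "\<And>ys xs i. f ys xs i \<noteq> 0 \<Longrightarrow> length ys = 2 \<and> (\<forall>y\<in>set ys. y < n)"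
    using coch2D(1)[OF f k] by blast
  have fsym: "\<And>a b. f [a, b] = f [b, a]" using coch2D(3)[OF f k] by blast
  have supp: "length xs = k \<and> (\<forall>x\<in>set xs. x < n) \<and> i < n \<and> a < n"
    if nz: "Wf (\<lambda>c r. f [a, c] r i) xs \<noteq> 0" for a xs i
  proof -
    obtain j where j: "j < length xs" "f [a, xs ! j] (del j xs) i \<noteq> 0" using Wf_nz[OF nz] by blast
    have "length (del j xs) = k - 1 \<and> (\<forall>x\<in>set (del j xs). x < n) \<and> i < n" using PglD[OF P j(2)] .
    moreover have "a < n \<and> xs ! j < n" using fs[OF j(2)] by simp
    ultimately have "length xs = Suc (k - 1) \<and> (\<forall>x\<in>set xs. x < n) \<and> i < n \<and> a < n"
      using del_len_set[OF j(1), of "k - 1" n] by blast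
    then show ?thesis using k by simp
  qed
  have val: "hom2 k f [a] \<in> Pgl n k" for a
  proof (rule PglI)
    fix xs i assume "hom2 k f [a] xs i \<noteq> 0"
    then have "Wf (\<lambda>c r. f [a, c] r i) xs \<noteq> 0" unfolding hom2_def by simp
    then show "length xs = k \<and> (\<forall>x\<in>set xs. x < n) \<and> i < n" using supp by blast
  next
    fix i
    have "alt (Wf (\<lambda>c r. f [a, c] r i))" by (rule Wf_alt) (rule PglD_alt[OF P])
    then show "alt (\<lambda>xs. hom2 k f [a] xs i)" unfolding hom2_def by (simp add: alt_scale)
  qed
  show "hom2 k f \<in> cochains n (gl_alg n) k 1"
  proof (rule coch1I[OF k])
    fix ys xs i assume nz: "hom2 k f ys xs i \<noteq> 0"
    then have l: "length ys = 1" unfolding hom2_def by (simp split: if_splits)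
    then obtain a where ys: "ys = [a]" by (cases ys) auto
    have "Wf (\<lambda>c r. f [a, c] r i) xs \<noteq> 0" using nz unfolding ys hom2_def by simp
    then show "length ys = 1 \<and> (\<forall>y\<in>set ys. y < n)" using supp ys by auto
  next
    fix ys
    have "k = Suc (k - 1)" using k by simp
    then have pk: "prolong n (gl_alg n) k = Pgl n k" using prolong_gl[of n "k - 1"] by simp
    show "hom2 k f ys \<in> prolong n (gl_alg n) k"
    proof (cases "length ys = 1")
      case True
      then obtain a where ys: "ys = [a]" by (cases ys) auto
      show ?thesis using val pk ys by simp
    next
      case False
      then have "hom2 k f ys = (\<lambda>_ _. 0)" unfolding hom2_def by simp
      then show ?thesis using zero_Pgl pk by simp
    qed
  qed
  show "spencer_d (hom2 k f) = f"
  proof (intro ext)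
    fix ys xs i
    show "spencer_d (hom2 k f) ys xs i = f ys xs i"
    proof (cases "length ys = 2")
      case False
      have "spencer_d (hom2 k f) ys xs i = 0"
        by (rule d_zero[of _ 1]) (use False in \<open>auto simp: hom2_def numeral_2_eq_2 split: if_splits\<close>)
      moreover have "f ys xs i = 0" using fs False by blast
      ultimately show ?thesis by simp
    next
      case True
      then obtain a b where ys: "ys = [a, b]"
        by (cases ys; cases "tl ys") (auto simp: numeral_2_eq_2)
      define F where "F = (\<lambda>r. f [a, b] r i)"
      have aF: "alt F" unfolding F_def by (rule PglD_alt[OF P])
      have fba: "f [b, a] r i = F r" for r using fsym[of b a] unfolding F_def by simp
      have c3: "f [b, c] (a # r) i + f [a, c] (b # r) i = - F (c # r)" for c r
      proof -
        have "spencer_d f [a, b, c] r i = 0" using cyc by simp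
        then show ?thesis unfolding d_len3 F_def by (simp add: eq_neg_iff_add_eq_0)
      qed
      have w1: "Wf (\<lambda>c r. f [b, c] r i) (a # xs) = F xs - Wf (\<lambda>c r. f [b, c] (a # r) i) xs"
        using Wf_Cons[of "\<lambda>c r. f [b, c] r i" a xs] fba by simp
      have w2: "Wf (\<lambda>c r. f [a, c] r i) (b # xs) = F xs - Wf (\<lambda>c r. f [a, c] (b # r) i) xs"
        using Wf_Cons[of "\<lambda>c r. f [a, c] r i" b xs] unfolding F_def by simp
      have w3: "Wf (\<lambda>c r. f [b, c] (a # r) i) xs + Wf (\<lambda>c r. f [a, c] (b # r) i) xs = - (of_nat (length xs) * F xs)"
      proof -
        have "Wf (\<lambda>c r. f [b, c] (a # r) i) xs + Wf (\<lambda>c r. f [a, c] (b # r) i) xs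
            = Wf (\<lambda>c r. f [b, c] (a # r) i + f [a, c] (b # r) i) xs" by (rule Wf_add[symmetric])
        also have "\<dots> = Wf (\<lambda>c r. - F (c # r)) xs" by (rule Wf_cong) (rule c3)
        also have "\<dots> = - Wf (\<lambda>c r. F (c # r)) xs" by (rule Wf_neg)
        also have "\<dots> = - (of_nat (length xs) * F xs)" using Wf_front[OF aF] by simp
        finally show ?thesis .
      qed
      have "spencer_d (hom2 k f) [a, b] xs i
          = inverse (of_nat (k + 1)) * (Wf (\<lambda>c r. f [b, c] r i) (a # xs) + Wf (\<lambda>c r. f [a, c] r i) (b # xs))"
        unfolding d_len2 hom2_def by (simp add: algebra_simps)
      also have "\<dots> = inverse (of_nat (k + 1)) * ((2 + of_nat (length xs)) * F xs)"
      proof -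
        let ?P = "Wf (\<lambda>c r. f [b, c] (a # r) i) xs" and ?Q = "Wf (\<lambda>c r. f [a, c] (b # r) i) xs"
        have "Wf (\<lambda>c r. f [b, c] r i) (a # xs) + Wf (\<lambda>c r. f [a, c] r i) (b # xs) = (F xs - ?P) + (F xs - ?Q)"
          using w1 w2 by simp
        also have "\<dots> = 2 * F xs - (?P + ?Q)" by (simp add: algebra_simps)
        also have "\<dots> = (2 + of_nat (length xs)) * F xs" unfolding w3 by (simp add: algebra_simps)
        finally show ?thesis by simp
      qed
      also have "\<dots> = F xs"
      proof (cases "F xs = 0")
        case True then show ?thesis by simp
      next
        case False
        then have "length xs = k - 1" using PglD[OF P, of "[a, b]" xs i] unfolding F_def by blast
        then have e: "(2 + of_nat (length xs) :: complex) = of_nat (k + 1)" using k by (simp add: of_nat_diff)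
        have nz: "(of_nat (k + 1) :: complex) \<noteq> 0" by (simp only: of_nat_eq_0_iff)
        show ?thesis unfolding e by (simp only: mult.assoc[symmetric] left_inverse[OF nz] mult_1_left)
      qed
      finally show ?thesis unfolding ys F_def .
    qed
  qed
qed

definition Dg :: "nat \<Rightarrow> cochain \<Rightarrow> nat \<Rightarrow> nat list \<Rightarrow> complex" where
  "Dg n g a ys = (\<Sum>i<n. g [a] (i # ys) i)"

definition Eg :: "nat \<Rightarrow> nat \<Rightarrow> cochain \<Rightarrow> nat list \<Rightarrow> complex" where
  "Eg n k g xs = inverse (of_nat k) * Wf (Dg n g) xs"

lemma coch1_gl_val:
  assumes "g \<in> cochains n (gl_alg n) k 1" "k > 0"
  shows "g ys \<in> Pgl n k"
proof -
  have "k = Suc (k - 1)" using assms(2) by simp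
  then have pk: "prolong n (gl_alg n) k = Pgl n k" using prolong_gl[of n "k - 1"] by simp
  show ?thesis using coch1D(2)[OF assms] pk by simp
qed

lemma coch1_gl_a:
  assumes "g \<in> cochains n G0 k 1" "k > 0" "g [a] xs i \<noteq> 0"
  shows "a < n"
  using coch1D(1)[OF assms(1,2) assms(3)] by simp

lemma DE:
  assumes k: "k > 0" and g: "g \<in> cochains n (gl_alg n) k 1"
    and dv: "\<And>a b ys. (\<Sum>i<n. spencer_d g [a, b] (i # ys) i) = 0"
  shows "alt (Eg n k g)"
    and "\<And>xs. Eg n k g xs \<noteq> 0 \<Longrightarrow> length xs = k \<and> (\<forall>x\<in>set xs. x < n)"
    and "\<And>a ys. Dg n g a ys = Eg n k g (a # ys)"
proof -
  have gP: "g ys \<in> Pgl n k" for ys by (rule coch1_gl_val[OF g k])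
  have altD: "alt (Dg n g a)" for a
    unfolding Dg_def by (rule alt_sum) (rule alt_tail[OF PglD_alt[OF gP]])
  have Dsupp: "length ys = k - 1 \<and> (\<forall>x\<in>set ys. x < n) \<and> a < n" if nz: "Dg n g a ys \<noteq> 0" for a ys
  proof -
    obtain i where i: "i \<in> {..<n}" "g [a] (i # ys) i \<noteq> 0" using sum_nz[OF nz[unfolded Dg_def]] by blast
    have "length (i # ys) = k \<and> (\<forall>x\<in>set (i # ys). x < n)" using PglD[OF gP i(2)] by blast
    moreover have "a < n" using coch1_gl_a[OF g k i(2)] .
    ultimately show ?thesis by auto
  qed
  have Dc: "Dg n g b (a # r) + Dg n g a (b # r) = 0" for a b r
  proof -
    have e1: "g [b] (i # a # r) i = - g [b] (a # i # r) i" for i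
      using alt_head[OF PglD_alt[OF gP[of "[b]"]], of i a r] by simp
    have e2: "g [a] (i # b # r) i = - g [a] (b # i # r) i" for i
      using alt_head[OF PglD_alt[OF gP[of "[a]"]], of i b r] by simp
    have "Dg n g b (a # r) + Dg n g a (b # r) = (\<Sum>i<n. g [b] (i # a # r) i + g [a] (i # b # r) i)"
      unfolding Dg_def by (simp add: sum.distrib)
    also have "\<dots> = - (\<Sum>i<n. spencer_d g [a, b] (i # r) i)"
      by (rule sum_neg_cong) (simp add: d_len2 e1 e2)
    also have "\<dots> = 0" using dv by simp
    finally show ?thesis .
  qed
  have H: "Wf (Dg n g) (a # ys) = of_nat (Suc (length ys)) * Dg n g a ys" for a ys
    by (rule H1[OF altD Dc])
  show "alt (Eg n k g)" unfolding Eg_def by (rule alt_scale) (rule Wf_alt[OF altD])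
  show "Eg n k g xs \<noteq> 0 \<Longrightarrow> length xs = k \<and> (\<forall>x\<in>set xs. x < n)" for xs
  proof -
    assume "Eg n k g xs \<noteq> 0"
    then have "Wf (Dg n g) xs \<noteq> 0" unfolding Eg_def by simp
    then obtain j where j: "j < length xs" "Dg n g (xs ! j) (del j xs) \<noteq> 0" using Wf_nz by blast
    from Dsupp[OF j(2)] have "length xs = Suc (k - 1) \<and> (\<forall>x\<in>set xs. x < n)"
      using del_len_set[OF j(1), of "k - 1" n] by blast
    then show ?thesis using k by simp
  qed
  show "Dg n g a ys = Eg n k g (a # ys)" for a ys
  proof (cases "Dg n g a ys = 0")
    case True then show ?thesis unfolding Eg_def H by simp
  next
    case False
    then have "Suc (length ys) = k" using Dsupp k by force
    then show ?thesis unfolding Eg_def H using k by simp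
  qed
qed




lemma Pgl_lin: assumes "T \<in> Pgl n m" "S \<in> Pgl n m" shows "(\<lambda>xs i. T xs i + c * S xs i) \<in> Pgl n m"
proof (rule PglI)
  fix xs i assume "T xs i + c * S xs i \<noteq> 0"
  then have "T xs i \<noteq> 0 \<or> S xs i \<noteq> 0" by auto
  then show "length xs = m \<and> (\<forall>x\<in>set xs. x < n) \<and> i < n" using PglD[OF assms(1)] PglD[OF assms(2)] by blast
next
  fix i show "alt (\<lambda>xs. T xs i + c * S xs i)"
    by (rule alt_add[OF PglD_alt[OF assms(1)] alt_scale[OF PglD_alt[OF assms(2)]]])
qed

lemma slice_Pgl: assumes "T \<in> Pgl n (Suc m)" shows "(\<lambda>xs i. T (a # xs) i) \<in> Pgl n m"
proof (rule PglI)
  fix xs i assume "T (a # xs) i \<noteq> 0"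
  then show "length xs = m \<and> (\<forall>x\<in>set xs. x < n) \<and> i < n" using PglD[OF assms] by fastforce
next
  fix i show "alt (\<lambda>xs. T (a # xs) i)" by (rule alt_tail[OF PglD_alt[OF assms]])
qed

lemma PslI: "T \<in> Pgl n m \<Longrightarrow> (\<And>ys. (\<Sum>i<n. T (i # ys) i) = 0) \<Longrightarrow> T \<in> Psl n m"
  unfolding Psl_def by blast

lemma PslD: "T \<in> Psl n m \<Longrightarrow> (\<Sum>i<n. T (i # ys) i) = 0"
  unfolding Psl_def by blast

lemma prolong_sl_eq: "k > 0 \<Longrightarrow> prolong n (sl_alg n) k = Psl n k"
  using prolong_sl[of n "k - 1"] by simp

lemma coch1_zero: assumes "g \<in> cochains n G0 k 1" "k > 0" "length ys \<noteq> 1" shows "g ys = (\<lambda>_ _. 0)"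
  using coch1D(1)[OF assms(1,2)] assms(3) by (intro ext) blast

lemma slw:
  assumes k: "k > 0" and w: "w \<in> cocycles n (sl_alg n) k 2"
  shows "\<And>ys. w ys \<in> Pgl n (k - 1)" and "\<And>a b ys. (\<Sum>i<n. w [a, b] (i # ys) i) = 0"
proof -
  have wc: "w \<in> cochains n (sl_alg n) k 2" using w unfolding cocycles_def by blast
  have v: "w ys \<in> prolong n (sl_alg n) (k - 1)" for ys by (rule coch2D(2)[OF wc k])
  show "w ys \<in> Pgl n (k - 1)" for ys
  proof (cases "k = 1")
    case True
    have "prolong n (sl_alg n) (k - 1) = Pgl n 0" using True prolong0[of n "sl_alg n"] by (simp del: prolong.simps)
    then show ?thesis using v True by simp
  next
    case False
    then have "prolong n (sl_alg n) (k - 1) = Psl n (k - 1)" using k prolong_sl_eq[of "k - 1" n] by simp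
    then show ?thesis using v Psl_Pgl by blast
  qed
  show "(\<Sum>i<n. w [a, b] (i # ys) i) = 0" for a b ys
  proof (cases "k = 1")
    case True
    have "prolong n (sl_alg n) (k - 1) = Pgl n 0" using True prolong0[of n "sl_alg n"] by (simp del: prolong.simps)
    then have "w [a, b] \<in> Pgl n 0" using v by simp
    then have "w [a, b] (i # ys) i = 0" for i using PglD[of "w [a, b]" n 0 "i # ys" i] by auto
    then show ?thesis by simp
  next
    case False
    then have "prolong n (sl_alg n) (k - 1) = Psl n (k - 1)" using k prolong_sl_eq[of "k - 1" n] by simp
    then show ?thesis using v PslD by blast
  qed
qed

lemma slfix:
  assumes k: "k > 0" and kn: "k \<noteq> n" and g: "g \<in> cochains n (gl_alg n) k 1"
    and dv: "\<And>a b ys. (\<Sum>i<n. spencer_d g [a, b] (i # ys) i) = 0"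
  shows "spencer_d g \<in> coboundaries n (sl_alg n) k 2"
proof -
  define E where "E = Eg n k g"
  have aE: "alt E" unfolding E_def by (rule DE(1)[OF k g dv])
  have sE: "\<And>xs. E xs \<noteq> 0 \<Longrightarrow> length xs = k \<and> (\<forall>x\<in>set xs. x < n)" unfolding E_def by (rule DE(2)[OF k g dv])
  have DEq: "\<And>a ys. Dg n g a ys = E (a # ys)" unfolding E_def by (rule DE(3)[OF k g dv])
  have gP: "g ys \<in> Pgl n k" for ys by (rule coch1_gl_val[OF g k])
  define \<phi> where "\<phi> = (\<lambda>xs i. if i < n then inverse (of_nat n - of_nat k) * Wf (\<lambda>c r. if c = i then E r else 0) xs else (0::complex))"
  have a\<phi>: "alt (\<lambda>xs. \<phi> xs i)" for i
    unfolding \<phi>_def by (rule alt_if, rule alt_scale, rule Wf_alt, rule alt_if[OF aE])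
  have s\<phi>: "length xs = Suc k \<and> (\<forall>x\<in>set xs. x < n) \<and> i < n" if nz: "\<phi> xs i \<noteq> 0" for xs i
  proof -
    have i: "i < n" and "Wf (\<lambda>c r. if c = i then E r else 0) xs \<noteq> 0" using nz unfolding \<phi>_def by (auto split: if_splits)
    then obtain j where j: "j < length xs" "(if xs ! j = i then E (del j xs) else 0) \<noteq> 0" using Wf_nz by blast
    then have xj: "xs ! j = i" and e: "E (del j xs) \<noteq> 0" by (auto split: if_splits)
    show ?thesis using del_len_set[OF j(1)] sE[OF e] xj i by blast
  qed
  have cnt: "(\<Sum>i<n. Wf (\<lambda>c r. if c = i then E (i # r) else 0) zs) = of_nat k * E zs" for zs
  proof -
    have "Wf (\<lambda>c r. if c = i then E (i # r) else 0) zs = (\<Sum>j<length zs. if zs ! j = i then E zs else 0)" for i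
      unfolding Wf_def
    proof (rule sum.cong)
      fix j assume "j \<in> {..<length zs}"
      then have "E (zs ! j # del j zs) = (-1) ^ j * E zs" using move_front[OF aE] by simp
      then show "(-1) ^ j * (if zs ! j = i then E (i # del j zs) else 0) = (if zs ! j = i then E zs else 0)"
        by (auto simp: power_mult_distrib[symmetric] mult.assoc[symmetric])
    qed simp
    then have "(\<Sum>i<n. Wf (\<lambda>c r. if c = i then E (i # r) else 0) zs) = (\<Sum>i<n. \<Sum>j<length zs. if zs ! j = i then E zs else 0)"
      by simp
    also have "\<dots> = (\<Sum>j<length zs. \<Sum>i<n. if zs ! j = i then E zs else 0)" by (rule sum.swap)
    also have "\<dots> = (\<Sum>j<length zs. if zs ! j < n then E zs else 0)" by (simp add: sum.delta)
    also have "\<dots> = of_nat k * E zs"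
    proof (cases "E zs = 0")
      case True
      have "(if zs ! j < n then E zs else 0) = 0" for j using True by simp
      then show ?thesis using True by simp
    next
      case False
      then have l: "length zs = k" and e: "\<forall>x\<in>set zs. x < n" using sE by auto
      have "(\<Sum>j<length zs. if zs ! j < n then E zs else 0) = (\<Sum>j<length zs. E zs)"
        by (rule sum.cong) (use e in auto)
      then show ?thesis using l by simp
    qed
    finally show ?thesis .
  qed
  have nk: "(of_nat n - of_nat k :: complex) \<noteq> 0" using kn by simp
  have div\<phi>: "(\<Sum>i<n. \<phi> (i # zs) i) = E zs" for zs
  proof -
    have "\<phi> (i # zs) i = inverse (of_nat n - of_nat k) * (E zs - Wf (\<lambda>c r. if c = i then E (i # r) else 0) zs)"
      if "i < n" for i
      using that Wf_Cons[of "\<lambda>c r. if c = i then E r else 0" i zs] unfolding \<phi>_def by simp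
    then have "(\<Sum>i<n. \<phi> (i # zs) i) = (\<Sum>i<n. inverse (of_nat n - of_nat k) * (E zs - Wf (\<lambda>c r. if c = i then E (i # r) else 0) zs))"
      by simp
    also have "\<dots> = inverse (of_nat n - of_nat k) * (of_nat n * E zs - of_nat k * E zs)"
      by (simp add: sum_distrib_left[symmetric] sum_subtractf cnt)
    also have "\<dots> = inverse (of_nat n - of_nat k) * ((of_nat n - of_nat k) * E zs)"
      by (simp add: algebra_simps)
    also have "\<dots> = E zs" by (simp only: mult.assoc[symmetric] left_inverse[OF nk] mult_1_left)
    finally show ?thesis .
  qed
  define \<psi> where "\<psi> = (\<lambda>ys xs i. if length ys = 1 then \<phi> (hd ys # xs) i else 0)"
  define g' where "g' = (\<lambda>ys xs i. g ys xs i + 1 * \<psi> ys xs i)"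
  have d\<psi>: "spencer_d \<psi> ys xs i = 0" for ys xs i
  proof (cases "length ys = 2")
    case True
    then obtain a b where ys: "ys = [a, b]" by (cases ys; cases "tl ys") (auto simp: numeral_2_eq_2)
    have "\<phi> (b # a # xs) i = - \<phi> (a # b # xs) i" by (rule alt_head[OF a\<phi>])
    then show ?thesis unfolding ys d_len2 \<psi>_def by simp
  next
    case False
    show ?thesis by (rule d_zero[of _ 1]) (use False in \<open>auto simp: \<psi>_def numeral_2_eq_2 split: if_splits\<close>)
  qed
  have dg': "spencer_d g' = spencer_d g"
    unfolding g'_def by (intro ext) (simp only: d_lin d\<psi>, simp)
  have g'c: "g' \<in> cochains n (sl_alg n) k 1"
  proof (rule coch1I[OF k])
    fix ys xs i assume nz: "g' ys xs i \<noteq> 0"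
    show "length ys = 1 \<and> (\<forall>y\<in>set ys. y < n)"
    proof (cases "g ys xs i = 0")
      case False then show ?thesis using coch1D(1)[OF g k] by blast
    next
      case True
      then have l: "length ys = 1" and p: "\<phi> (hd ys # xs) i \<noteq> 0" using nz unfolding g'_def \<psi>_def by (auto split: if_splits)
      then obtain a where ys: "ys = [a]" by (cases ys) auto
      show ?thesis using s\<phi>[OF p] ys by simp
    qed
  next
    fix ys
    show "g' ys \<in> prolong n (sl_alg n) k"
      unfolding prolong_sl_eq[OF k]
    proof (cases "length ys = 1")
      case False
      then have "g' ys = (\<lambda>_ _. 0)" using coch1_zero[OF g k False] unfolding g'_def \<psi>_def by (intro ext) simp
      then show "g' ys \<in> Psl n k" using zero_Psl by simp
    next
      case True
      then obtain a where ys: "ys = [a]" by (cases ys) auto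
      have p1: "(\<lambda>xs i. \<phi> (a # xs) i) \<in> Pgl n k"
      proof (rule PglI)
        fix xs i assume "\<phi> (a # xs) i \<noteq> 0"
        then show "length xs = k \<and> (\<forall>x\<in>set xs. x < n) \<and> i < n" using s\<phi> by fastforce
      next
        fix i show "alt (\<lambda>xs. \<phi> (a # xs) i)" by (rule alt_tail[OF a\<phi>])
      qed
      have e: "g' [a] = (\<lambda>xs i. g [a] xs i + 1 * \<phi> (a # xs) i)" unfolding g'_def \<psi>_def by simp
      have P: "g' [a] \<in> Pgl n k" unfolding e by (rule Pgl_lin[OF gP p1])
      show "g' ys \<in> Psl n k" unfolding ys
      proof (rule PslI[OF P])
        fix zs
        have e2: "\<phi> (a # i # zs) i = - \<phi> (i # a # zs) i" for i by (rule alt_head[OF a\<phi>])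
        have "(\<Sum>i<n. g' [a] (i # zs) i) = Dg n g a zs + (\<Sum>i<n. \<phi> (a # i # zs) i)"
          unfolding e Dg_def by (simp add: sum.distrib)
        also have "(\<Sum>i<n. \<phi> (a # i # zs) i) = - (\<Sum>i<n. \<phi> (i # a # zs) i)"
          by (rule sum_neg_cong) (rule e2)
        finally show "(\<Sum>i<n. g' [a] (i # zs) i) = 0" using div\<phi>[of "a # zs"] DEq[of a zs] by simp
      qed
    qed
  qed
  show ?thesis unfolding coboundaries_def using g'c dg'[symmetric] by simp
qed




definition g0 :: "nat \<Rightarrow> cochain" where
  "g0 n = (\<lambda>ys xs i. if length ys = 1 \<and> hd ys < n \<and> i = hd ys then vol n xs else 0)"

lemma prolong_gl_eq: "k > 0 \<Longrightarrow> prolong n (gl_alg n) k = Pgl n k"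
  using prolong_gl[of n "k - 1"] by simp

lemma g0_Pgl: "g0 n ys \<in> Pgl n n"
proof (rule PglI)
  fix xs i assume nz: "g0 n ys xs i \<noteq> 0"
  then have "vol n xs \<noteq> 0" "i < n" unfolding g0_def by (auto split: if_splits)
  then show "length xs = n \<and> (\<forall>x\<in>set xs. x < n) \<and> i < n" using vol_supp by blast
next
  fix i show "alt (\<lambda>xs. g0 n ys xs i)" unfolding g0_def by (rule alt_if[OF vol_alt])
qed

lemma g0_coch: assumes "n > 0" shows "g0 n \<in> cochains n (gl_alg n) n 1"
proof (rule coch1I[OF assms])
  fix ys xs i assume "g0 n ys xs i \<noteq> 0"
  then have "length ys = 1" "hd ys < n" unfolding g0_def by (auto split: if_splits)
  then show "length ys = 1 \<and> (\<forall>y\<in>set ys. y < n)" by (cases ys) auto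
next
  fix ys show "g0 n ys \<in> prolong n (gl_alg n) n" unfolding prolong_gl_eq[OF assms] by (rule g0_Pgl)
qed

lemma Dg_g0: "Dg n (g0 n) a ys = vol n (a # ys)"
proof -
  have "Dg n (g0 n) a ys = (\<Sum>i<n. if a < n \<and> i = a then vol n (i # ys) else 0)"
    unfolding Dg_def g0_def by simp
  also have "\<dots> = (if a < n then vol n (a # ys) else 0)"
    by (cases "a < n") (simp_all add: sum.delta')
  also have "\<dots> = vol n (a # ys)" using vol_supp[of n "a # ys"] by auto
  finally show ?thesis .
qed

lemma len2_cases: "length ys = 2 \<Longrightarrow> \<exists>a b. ys = [a, b]"
  by (cases ys; cases "tl ys") (auto simp: numeral_2_eq_2)

lemma len3_cases: "length ys = 3 \<Longrightarrow> \<exists>a b c. ys = [a, b, c]"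
  by (cases ys; cases "tl ys"; cases "tl (tl ys)") (auto simp: numeral_3_eq_3)

lemma dC1:
  assumes k: "2 \<le> k" and g: "g \<in> cochains n (gl_alg n) k 1"
    and Dc: "\<And>a b ys. Dg n g b (a # ys) + Dg n g a (b # ys) = 0"
  shows "spencer_d g \<in> cochains n (sl_alg n) k 2"
proof -
  have k0: "k > 0" using k by simp
  have gP: "g ys \<in> Pgl n k" for ys by (rule coch1_gl_val[OF g k0])
  have gs: "length ys = 1" if "g ys xs i \<noteq> 0" for ys xs i using coch1D(1)[OF g k0 that] by blast
  have kk: "k = Suc (k - 1)" using k by simp
  show ?thesis
  proof (rule coch2I[OF k0])
    fix ys xs i assume nz: "spencer_d g ys xs i \<noteq> 0"
    have l2: "length ys = 2"
    proof (rule ccontr)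
      assume "length ys \<noteq> 2"
      then have "spencer_d g ys xs i = 0" by (intro d_zero[of _ 1]) (use gs in \<open>auto simp: numeral_2_eq_2\<close>)
      then show False using nz by simp
    qed
    then obtain a b where ys: "ys = [a, b]" using len2_cases by blast
    have "g [b] (a # xs) i \<noteq> 0 \<or> g [a] (b # xs) i \<noteq> 0" using nz unfolding ys d_len2 by auto
    then have "a < n \<and> b < n"
    proof
      assume h: "g [b] (a # xs) i \<noteq> 0"
      show ?thesis using coch1_gl_a[OF g k0 h] PglD[OF gP h] by simp
    next
      assume h: "g [a] (b # xs) i \<noteq> 0"
      show ?thesis using coch1_gl_a[OF g k0 h] PglD[OF gP h] by simp
    qed
    then show "length ys = 2 \<and> (\<forall>y\<in>set ys. y < n)" using ys by simp
  next
    fix ys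
    have pr: "prolong n (sl_alg n) (k - 1) = Psl n (k - 1)" using k prolong_sl_eq[of "k - 1" n] by simp
    show "spencer_d g ys \<in> prolong n (sl_alg n) (k - 1)" unfolding pr
    proof (cases "length ys = 2")
      case False
      have "spencer_d g ys = (\<lambda>_ _. 0)"
        by (intro ext d_zero[of _ 1]) (use gs False in \<open>auto simp: numeral_2_eq_2\<close>)
      then show "spencer_d g ys \<in> Psl n (k - 1)" using zero_Psl by simp
    next
      case True
      then obtain a b where ys: "ys = [a, b]" using len2_cases by blast
      have e: "spencer_d g [a, b] = (\<lambda>xs i. g [b] (a # xs) i + 1 * g [a] (b # xs) i)"
        by (intro ext) (simp add: d_len2)
      have P: "spencer_d g [a, b] \<in> Pgl n (k - 1)" unfolding e
        by (rule Pgl_lin[OF slice_Pgl slice_Pgl]) (use gP kk in simp_all)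
      show "spencer_d g ys \<in> Psl n (k - 1)" unfolding ys
      proof (rule PslI[OF P])
        fix zs
        have e1: "g [b] (a # i # zs) i = - g [b] (i # a # zs) i" for i
          by (rule alt_head[OF PglD_alt[OF gP]])
        have e2: "g [a] (b # i # zs) i = - g [a] (i # b # zs) i" for i
          by (rule alt_head[OF PglD_alt[OF gP]])
        have "(\<Sum>i<n. spencer_d g [a, b] (i # zs) i) = - (Dg n g b (a # zs) + Dg n g a (b # zs))"
          unfolding Dg_def sum.distrib[symmetric] by (rule sum_neg_cong) (simp add: d_len2 e1 e2)
        then show "(\<Sum>i<n. spencer_d g [a, b] (i # zs) i) = 0" using Dc by simp
      qed
    qed
  next
    fix a b show "spencer_d g [a, b] = spencer_d g [b, a]"
      by (intro ext) (simp add: d_len2 add.commute)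
  qed
qed

lemma dd_zero:
  assumes g: "g \<in> cochains n (gl_alg n) k 1" and k0: "k > 0"
  shows "spencer_d (spencer_d g) = (\<lambda>_ _ _. 0)"
proof (intro ext)
  fix ys xs i
  have gP: "g ys \<in> Pgl n k" for ys by (rule coch1_gl_val[OF g k0])
  have gs: "length ys = 1" if "g ys xs i \<noteq> 0" for ys xs i using coch1D(1)[OF g k0 that] by blast
  have ds: "length ys = 2" if "spencer_d g ys xs i \<noteq> 0" for ys xs i
  proof (rule ccontr)
    assume "length ys \<noteq> 2"
    then have "spencer_d g ys xs i = 0" by (intro d_zero[of _ 1]) (use gs in \<open>auto simp: numeral_2_eq_2\<close>)
    then show False using that by simp
  qed
  show "spencer_d (spencer_d g) ys xs i = 0"
  proof (cases "length ys = 3")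
    case False
    show ?thesis by (rule d_zero[of _ 2]) (use ds False in \<open>auto simp: numeral_3_eq_3 numeral_2_eq_2\<close>)
  next
    case True
    then obtain a b c where ys: "ys = [a, b, c]" using len3_cases by blast
    have p: "g [x] (y # z # xs) i = - g [x] (z # y # xs) i" for x y z
      by (rule alt_head[OF PglD_alt[OF gP]])
    show ?thesis unfolding ys d_len3 d_len2 using p[of c b a] p[of b c a] p[of a c b] by simp
  qed
qed

lemma pigeon: assumes "length xs > n" "\<forall>x\<in>set xs. x < n" shows "\<not> distinct xs"
proof
  assume d: "distinct xs"
  have "set xs \<subseteq> {..<n}" using assms(2) by auto
  then have "card (set xs) \<le> n" using card_mono[of "{..<n}" "set xs"] by simp
  then show False using distinct_card[OF d] assms(1) by simp
qed

lemma z_cocycle: assumes n: "n > 1" shows "spencer_d (g0 n) \<in> cocycles n (sl_alg n) n 2"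
proof -
  have n0: "n > 0" using n by simp
  have c: "spencer_d (g0 n) \<in> cochains n (sl_alg n) n 2"
  proof (rule dC1[OF _ g0_coch[OF n0]])
    show "2 \<le> n" using n by simp
  next
    fix a b ys
    show "Dg n (g0 n) b (a # ys) + Dg n (g0 n) a (b # ys) = 0"
      unfolding Dg_g0 using alt_head[OF vol_alt, of n b a ys] by simp
  qed
  show ?thesis unfolding cocycles_def using c dd_zero[OF g0_coch[OF n0] n0] by blast
qed

lemma z_not_cob: assumes n: "n > 1" shows "spencer_d (g0 n) \<notin> coboundaries n (sl_alg n) n 2"
proof
  have n0: "n > 0" using n by simp
  assume "spencer_d (g0 n) \<in> coboundaries n (sl_alg n) n 2"
  then obtain h where h: "h \<in> cochains n (sl_alg n) n 1" and e: "spencer_d (g0 n) = spencer_d h"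
    unfolding coboundaries_def by auto
  have hP: "h ys \<in> Psl n n" for ys using coch1D(2)[OF h n0] prolong_sl_eq[OF n0] by simp
  have hs: "a < n" if "h [a] xs i \<noteq> 0" for a xs i using coch1D(1)[OF h n0 that] by simp
  define u where "u = (\<lambda>ys xs i. g0 n ys xs i + (-1) * h ys xs i)"
  have du: "spencer_d u ys xs i = 0" for ys xs i
    unfolding u_def d_lin e by simp
  have uP: "u ys \<in> Pgl n n" for ys unfolding u_def
    by (rule Pgl_lin[OF g0_Pgl]) (use hP Psl_Pgl in blast)
  have u0: "u [a] ys i = 0" for a ys i
  proof -
    define U where "U = (\<lambda>c r. u [c] r i)"
    have aU: "alt (U c)" for c unfolding U_def by (rule PglD_alt[OF uP])
    have cU: "U b (a # r) + U a (b # r) = 0" for a b r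
      using du[of "[a, b]" r i] unfolding U_def d_len2 .
    have Us: "length r = n \<and> (\<forall>x\<in>set r. x < n) \<and> c < n" if "U c r \<noteq> 0" for c r
    proof -
      have "g0 n [c] r i \<noteq> 0 \<or> h [c] r i \<noteq> 0" using that unfolding U_def u_def by auto
      then have "c < n" using hs unfolding g0_def by (auto split: if_splits)
      then show ?thesis using PglD[OF uP that[unfolded U_def]] by simp
    qed
    have W0: "Wf U xs = 0" for xs
    proof (rule ccontr)
      assume nz: "Wf U xs \<noteq> 0"
      then obtain j where j: "j < length xs" "U (xs ! j) (del j xs) \<noteq> 0" using Wf_nz by blast
      have "length xs = Suc n \<and> (\<forall>x\<in>set xs. x < n)" using del_len_set[OF j(1)] Us[OF j(2)] by blast
      then have "\<not> distinct xs" using pigeon[of n xs] by simp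
      then have "Wf U xs = 0" by (rule dup_zero[OF Wf_alt[OF aU]])
      then show False using nz by simp
    qed
    have "Wf U (a # ys) = of_nat (Suc (length ys)) * U a ys" by (rule H1[OF aU cU])
    then have "of_nat (Suc (length ys)) * U a ys = 0" using W0 by simp
    then show ?thesis unfolding U_def by (simp del: of_nat_Suc)
  qed
  have "(\<Sum>i<n. h [0] (i # [1..<n]) i) = 0" using PslD[OF hP] by blast
  moreover have "h [0] (i # [1..<n]) i = g0 n [0] (i # [1..<n]) i" for i
    using u0[of 0 "i # [1..<n]" i] unfolding u_def by simp
  ultimately have "Dg n (g0 n) 0 [1..<n] = 0" unfolding Dg_def by simp
  moreover have "vol n (0 # [1..<n]) = 1" using vol_val[of n] n0 upt_conv_Cons[OF n0] by simp
  ultimately show False unfolding Dg_g0 by simp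
qed




lemma cocycle_data:
  assumes k: "k > 0" and w: "w \<in> cocycles n (sl_alg n) k 2"
  shows "hom2 k w \<in> cochains n (gl_alg n) k 1" and "spencer_d (hom2 k w) = w"
    and "\<And>a b ys. (\<Sum>i<n. spencer_d (hom2 k w) [a, b] (i # ys) i) = 0"
proof -
  have wc: "w \<in> cochains n (sl_alg n) k 2" and dw: "spencer_d w = (\<lambda>_ _ _. 0)"
    using w unfolding cocycles_def by auto
  show g: "hom2 k w \<in> cochains n (gl_alg n) k 1" by (rule H2(1)[OF k wc dw slw(1)[OF k w]])
  show e: "spencer_d (hom2 k w) = w" by (rule H2(2)[OF k wc dw slw(1)[OF k w]])
  show "(\<Sum>i<n. spencer_d (hom2 k w) [a, b] (i # ys) i) = 0" for a b ys
    unfolding e by (rule slw(2)[OF k w])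
qed

lemma dim1: assumes n: "n > 1" shows "spencer_H_dim1 n (sl_alg n) n 2"
  unfolding spencer_H_dim1_def
proof (intro bexI conjI ballI)
  have n0: "n > 0" using n by simp
  show "spencer_d (g0 n) \<in> cocycles n (sl_alg n) n 2" by (rule z_cocycle[OF n])
  show "spencer_d (g0 n) \<notin> coboundaries n (sl_alg n) n 2" by (rule z_not_cob[OF n])
  fix w assume w: "w \<in> cocycles n (sl_alg n) n 2"
  define g where "g = hom2 n w"
  have g: "g \<in> cochains n (gl_alg n) n 1" and dg: "spencer_d g = w"
    and dv: "\<And>a b ys. (\<Sum>i<n. spencer_d g [a, b] (i # ys) i) = 0"
    unfolding g_def using cocycle_data[OF n0 w] by auto
  define E where "E = Eg n n g"
  have aE: "alt E" unfolding E_def by (rule DE(1)[OF n0 g dv])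
  have sE: "\<And>xs. E xs \<noteq> 0 \<Longrightarrow> length xs = n \<and> (\<forall>x\<in>set xs. x < n)" unfolding E_def by (rule DE(2)[OF n0 g dv])
  have DEq: "\<And>a ys. Dg n g a ys = E (a # ys)" unfolding E_def by (rule DE(3)[OF n0 g dv])
  define c where "c = E [0..<n]"
  have Ec: "E xs = c * vol n xs" for xs
  proof -
    have "E xs - c * vol n xs = 0"
    proof (rule top_form[of "\<lambda>xs. E xs - c * vol n xs" n])
      show "alt (\<lambda>xs. E xs - c * vol n xs)" by (rule alt_diff[OF aE alt_scale[OF vol_alt]])
    next
      fix xs assume "E xs - c * vol n xs \<noteq> 0"
      then have "E xs \<noteq> 0 \<or> vol n xs \<noteq> 0" by auto
      then show "length xs = n \<and> (\<forall>x\<in>set xs. x < n)" using sE vol_supp by blast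
    next
      show "E [0..<n] - c * vol n [0..<n] = 0" unfolding c_def vol_val by simp
    qed
    then show ?thesis by simp
  qed
  define g' where "g' = (\<lambda>ys xs i. g ys xs i + (- c) * g0 n ys xs i)"
  have gP: "g ys \<in> Pgl n n" for ys by (rule coch1_gl_val[OF g n0])
  have g'c: "g' \<in> cochains n (sl_alg n) n 1"
  proof (rule coch1I[OF n0])
    fix ys xs i assume nz: "g' ys xs i \<noteq> 0"
    then have "g ys xs i \<noteq> 0 \<or> g0 n ys xs i \<noteq> 0" unfolding g'_def by auto
    then show "length ys = 1 \<and> (\<forall>y\<in>set ys. y < n)"
      using coch1D(1)[OF g n0] coch1D(1)[OF g0_coch[OF n0] n0] by blast
  next
    fix ys
    show "g' ys \<in> prolong n (sl_alg n) n" unfolding prolong_sl_eq[OF n0]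
    proof (rule PslI)
      show "g' ys \<in> Pgl n n" unfolding g'_def by (rule Pgl_lin[OF gP g0_Pgl])
    next
      fix zs
      show "(\<Sum>i<n. g' ys (i # zs) i) = 0"
      proof (cases "length ys = 1")
        case False
        then show ?thesis using coch1_zero[OF g n0 False] coch1_zero[OF g0_coch[OF n0] n0 False]
          unfolding g'_def by simp
      next
        case True
        then obtain a where ys: "ys = [a]" by (cases ys) auto
        have "(\<Sum>i<n. g' ys (i # zs) i) = Dg n g a zs + (- c) * Dg n (g0 n) a zs"
          unfolding ys g'_def Dg_def by (simp add: sum.distrib sum_distrib_left sum_subtractf sum_negf)
        also have "\<dots> = 0" unfolding DEq Dg_g0 Ec by simp
        finally show ?thesis .
      qed
    qed
  qed
  have "(\<lambda>ys xs i. w ys xs i - c * spencer_d (g0 n) ys xs i) = spencer_d g'"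
    unfolding g'_def dg[symmetric] by (intro ext) (simp only: d_lin, simp)
  then show "\<exists>c. (\<lambda>ys xs i. w ys xs i - c * spencer_d (g0 n) ys xs i) \<in> coboundaries n (sl_alg n) n 2"
    unfolding coboundaries_def using g'c by auto
qed




lemma glD: "X \<in> gl_alg n \<Longrightarrow> X [a] b \<noteq> 0 \<Longrightarrow> a < n \<and> b < n"
  unfolding gl_alg_def by fastforce

lemma tens_act_Af: "tens_act n X T xs i = (\<Sum>a<n. T xs a * X [a] i) - Af n (\<lambda>a b. X [a] b) (\<lambda>r. T r i) xs"
  unfolding tens_act_def Af_def by simp

lemma set_upd_sub: assumes "j < length xs" shows "set xs \<subseteq> insert (xs ! j) (set (xs[j := b]))"
proof
  fix x assume "x \<in> set xs"
  then obtain i where i: "i < length xs" "xs ! i = x" by (auto simp: in_set_conv_nth)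
  show "x \<in> insert (xs ! j) (set (xs[j := b]))"
  proof (cases "i = j")
    case True then show ?thesis using i by simp
  next
    case False
    then have "xs[j := b] ! i = x" using i by simp
    then show ?thesis using i by (metis insertI2 length_list_update nth_mem)
  qed
qed

lemma sum_nz2: "(\<Sum>j\<in>A. \<Sum>b\<in>B. f j b) \<noteq> (0::complex) \<Longrightarrow> \<exists>j\<in>A. \<exists>b\<in>B. f j b \<noteq> 0"
  using sum_nz by fastforce

lemma Af_supp:
  assumes X: "X \<in> gl_alg n" and nz: "Af n (\<lambda>a b. X [a] b) F xs \<noteq> 0"
  shows "\<exists>j<length xs. \<exists>b<n. xs ! j < n \<and> F (xs[j := b]) \<noteq> 0"
proof -
  obtain j b where jb: "j \<in> {..<length xs}" "b \<in> {..<n}" "X [xs ! j] b * F (xs[j := b]) \<noteq> 0"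
    using sum_nz2[OF nz[unfolded Af_def]] by blast
  then show ?thesis using glD[OF X, of "xs ! j" b] by auto
qed

lemma tens_act_Pgl:
  assumes X: "X \<in> gl_alg n" and T: "T \<in> Pgl n m"
  shows "tens_act n X T \<in> Pgl n m"
proof (rule PglI)
  fix xs i assume nz: "tens_act n X T xs i \<noteq> 0"
  then have "(\<Sum>a<n. T xs a * X [a] i) \<noteq> 0 \<or> Af n (\<lambda>a b. X [a] b) (\<lambda>r. T r i) xs \<noteq> 0"
    unfolding tens_act_Af by auto
  then show "length xs = m \<and> (\<forall>x\<in>set xs. x < n) \<and> i < n"
  proof
    assume "(\<Sum>a<n. T xs a * X [a] i) \<noteq> 0"
    then obtain a where "T xs a * X [a] i \<noteq> 0" using sum_nz by blast
    then have "T xs a \<noteq> 0" "X [a] i \<noteq> 0" by auto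
    then show ?thesis using PglD[OF T] glD[OF X] by blast
  next
    assume "Af n (\<lambda>a b. X [a] b) (\<lambda>r. T r i) xs \<noteq> 0"
    then obtain j b where j: "j < length xs" "xs ! j < n" "T (xs[j := b]) i \<noteq> 0" using Af_supp[OF X] by blast
    have "length (xs[j := b]) = m \<and> (\<forall>x\<in>set (xs[j := b]). x < n) \<and> i < n" using PglD[OF T j(3)] .
    then show ?thesis using set_upd_sub[OF j(1), of b] j(2) by auto
  qed
next
  fix i
  have "alt (\<lambda>xs. (\<Sum>a<n. T xs a * X [a] i) - Af n (\<lambda>a b. X [a] b) (\<lambda>r. T r i) xs)"
    by (rule alt_diff[OF alt_sum[OF alt_scale2[OF PglD_alt[OF T]]] Af_alt[OF PglD_alt[OF T]]])
  then show "alt (\<lambda>xs. tens_act n X T xs i)" unfolding tens_act_Af .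
qed

lemma Pgl_sum:
  assumes "\<And>b. b \<in> B \<Longrightarrow> T b \<in> Pgl n m"
  shows "(\<lambda>xs i. \<Sum>b\<in>B. c b * T b xs i) \<in> Pgl n m"
proof (rule PglI)
  fix xs i assume "(\<Sum>b\<in>B. c b * T b xs i) \<noteq> 0"
  then obtain b where "b \<in> B" "c b * T b xs i \<noteq> 0" using sum_nz by blast
  then show "length xs = m \<and> (\<forall>x\<in>set xs. x < n) \<and> i < n" using PglD[OF assms] by auto
next
  fix i show "alt (\<lambda>xs. \<Sum>b\<in>B. c b * T b xs i)"
    by (rule alt_sum[OF alt_scale[OF PglD_alt[OF assms]]])
qed

lemma tens_act_zero: "tens_act n X (\<lambda>_ _. 0) = (\<lambda>_ _. 0)"
  unfolding tens_act_def by simp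

lemma Af_sum: "(\<Sum>i\<in>I. Af n M (F i) ys) = Af n M (\<lambda>r. \<Sum>i\<in>I. F i r) ys"
proof -
  have "(\<Sum>i\<in>I. Af n M (F i) ys) = (\<Sum>i\<in>I. \<Sum>j<length ys. \<Sum>b<n. M (ys ! j) b * F i (ys[j := b]))"
    unfolding Af_def ..
  also have "\<dots> = (\<Sum>j<length ys. \<Sum>i\<in>I. \<Sum>b<n. M (ys ! j) b * F i (ys[j := b]))" by (rule sum.swap)
  also have "\<dots> = (\<Sum>j<length ys. \<Sum>b<n. \<Sum>i\<in>I. M (ys ! j) b * F i (ys[j := b]))"
    by (rule sum.cong[OF refl]) (rule sum.swap)
  also have "\<dots> = Af n M (\<lambda>r. \<Sum>i\<in>I. F i r) ys" unfolding Af_def by (simp add: sum_distrib_left)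
  finally show ?thesis .
qed

lemma AfE0:
  assumes X: "X \<in> sl_alg n" and aE: "alt E" and sE: "\<And>xs. E xs \<noteq> 0 \<Longrightarrow> length xs = n \<and> (\<forall>x\<in>set xs. x < n)"
  shows "Af n (\<lambda>a b. X [a] b) E xs = 0"
proof (rule top_form[OF Af_alt[OF aE]])
  have Xg: "X \<in> gl_alg n" and tr: "(\<Sum>a<n. X [a] a) = 0" using X unfolding sl_alg_def by auto
  fix ys assume "Af n (\<lambda>a b. X [a] b) E ys \<noteq> 0"
  then obtain j b where j: "j < length ys" "ys ! j < n" "E (ys[j := b]) \<noteq> 0" using Af_supp[OF Xg] by blast
  have "length (ys[j := b]) = n \<and> (\<forall>x\<in>set (ys[j := b]). x < n)" using sE[OF j(3)] .
  then show "length ys = n \<and> (\<forall>x\<in>set ys. x < n)" using set_upd_sub[OF j(1), of b] j(2) by auto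
next
  have Xg: "X \<in> gl_alg n" and tr: "(\<Sum>a<n. X [a] a) = 0" using X unfolding sl_alg_def by auto
  have inner: "(\<Sum>b<n. X [j] b * E ([0..<n][j := b])) = X [j] j * E [0..<n]" if j: "j < n" for j
  proof -
    have "(\<Sum>b<n. X [j] b * E ([0..<n][j := b])) = (\<Sum>b<n. if b = j then X [j] j * E [0..<n] else 0)"
    proof (rule sum.cong[OF refl])
      fix b assume b: "b \<in> {..<n}"
      show "X [j] b * E ([0..<n][j := b]) = (if b = j then X [j] j * E [0..<n] else 0)"
      proof (cases "b = j")
        case True
        have "[0..<n][j := j] = [0..<n]" using j list_update_id[of "[0..<n]" j] by simp
        then show ?thesis using True by simp
      next
        case False
        have "\<not> distinct ([0..<n][j := b])"
        proof
          assume d: "distinct ([0..<n][j := b])"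
          have "[0..<n][j := b] ! j = b" "[0..<n][j := b] ! b = b" using j b False by auto
          then have "j = b" using d j b nth_eq_iff_index_eq[OF d, of j b] by auto
          then show False using False by simp
        qed
        then have "E ([0..<n][j := b]) = 0" by (rule dup_zero[OF aE])
        then show ?thesis using False by simp
      qed
    qed
    also have "\<dots> = X [j] j * E [0..<n]" using j by simp
    finally show ?thesis .
  qed
  have "Af n (\<lambda>a b. X [a] b) E [0..<n] = (\<Sum>j<n. X [j] j * E [0..<n])"
    unfolding Af_def by (rule sum.cong) (simp_all add: inner)
  also have "\<dots> = 0" using tr by (simp add: sum_distrib_right[symmetric])
  finally show "Af n (\<lambda>a b. X [a] b) E [0..<n] = 0" .
qed




lemma equiv:
  assumes gs: "\<And>ys xs i. g ys xs i \<noteq> 0 \<Longrightarrow> length ys = 1"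
  shows "cochain_act n X (spencer_d g) = spencer_d (cochain_act n X g)"
proof (intro ext)
  fix ys xs i
  have Xgs: "length ys = 1" if "cochain_act n X g ys xs i \<noteq> 0" for ys xs i
  proof (rule ccontr)
    assume l: "length ys \<noteq> 1"
    have z: "g zs = (\<lambda>_ _. 0)" if "length zs = length ys" for zs using gs l that by (intro ext) force
    have "cochain_act n X g ys xs i = 0"
      unfolding cochain_act_def using z[of ys] z[of "ys[_ := _]"] by (simp add: tens_act_zero)
    then show False using that by simp
  qed
  show "cochain_act n X (spencer_d g) ys xs i = spencer_d (cochain_act n X g) ys xs i"
  proof (cases "length ys = 2")
    case False
    have ds: "length zs = 2" if "spencer_d g zs xs i \<noteq> 0" for zs xs i
    proof (rule ccontr)
      assume "length zs \<noteq> 2"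
      then have "spencer_d g zs xs i = 0" by (intro d_zero[of _ 1]) (use gs in \<open>auto simp: numeral_2_eq_2\<close>)
      then show False using that by simp
    qed
    have z: "spencer_d g zs = (\<lambda>_ _. 0)" if "length zs = length ys" for zs
      using ds False that by (intro ext) force
    have "cochain_act n X (spencer_d g) ys xs i = 0"
      unfolding cochain_act_def using z[of ys] z[of "ys[_ := _]"] by (simp add: tens_act_zero)
    moreover have "spencer_d (cochain_act n X g) ys xs i = 0"
      by (rule d_zero[of _ 1]) (use Xgs False in \<open>auto simp: numeral_2_eq_2\<close>)
    ultimately show ?thesis by simp
  next
    case True
    then obtain p q where ys: "ys = [p, q]" using len2_cases by blast
    define A1 where "A1 = (\<Sum>a<n. g [q] (p # xs) a * X [a] i)"
    define A2 where "A2 = (\<Sum>a<n. g [p] (q # xs) a * X [a] i)"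
    define B1 where "B1 = (\<Sum>j<length xs. \<Sum>b<n. X [xs ! j] b * g [q] (p # xs[j := b]) i)"
    define B2 where "B2 = (\<Sum>j<length xs. \<Sum>b<n. X [xs ! j] b * g [p] (q # xs[j := b]) i)"
    define C1 where "C1 = (\<Sum>b<n. X [p] b * g [q] (b # xs) i)"
    define C2 where "C2 = (\<Sum>b<n. X [p] b * g [b] (q # xs) i)"
    define C3 where "C3 = (\<Sum>b<n. X [q] b * g [b] (p # xs) i)"
    define C4 where "C4 = (\<Sum>b<n. X [q] b * g [p] (b # xs) i)"
    have L: "cochain_act n X (spencer_d g) [p, q] xs i = (A1 + A2) - (B1 + B2) - ((C1 + C2) + (C3 + C4))"
    proof -
      have t: "tens_act n X (spencer_d g [p, q]) xs i = (A1 + A2) - (B1 + B2)"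
        unfolding tens_act_def d_len2 A1_def A2_def B1_def B2_def
        by (simp add: sum.distrib distrib_left distrib_right)
      have s: "(\<Sum>j<length [p, q]. \<Sum>b<n. X [[p, q] ! j] b * spencer_d g ([p, q][j := b]) xs i) = (C1 + C2) + (C3 + C4)"
        unfolding C1_def C2_def C3_def C4_def
        by (simp add: numeral_2_eq_2 d_len2 sum.distrib distrib_left)
      show ?thesis unfolding cochain_act_def t s ..
    qed
    have R1: "cochain_act n X g [q] (p # xs) i = A1 - (C1 + B1) - C3"
    proof -
      have t: "tens_act n X (g [q]) (p # xs) i = A1 - (C1 + B1)"
        unfolding tens_act_def A1_def B1_def C1_def length_Cons sum.lessThan_Suc_shift by simp
      have s: "(\<Sum>j<length [q]. \<Sum>b<n. X [[q] ! j] b * g ([q][j := b]) (p # xs) i) = C3"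
        unfolding C3_def by simp
      show ?thesis unfolding cochain_act_def t s ..
    qed
    have R2: "cochain_act n X g [p] (q # xs) i = A2 - (C4 + B2) - C2"
    proof -
      have t: "tens_act n X (g [p]) (q # xs) i = A2 - (C4 + B2)"
        unfolding tens_act_def A2_def B2_def C4_def length_Cons sum.lessThan_Suc_shift by simp
      have s: "(\<Sum>j<length [p]. \<Sum>b<n. X [[p] ! j] b * g ([p][j := b]) (q # xs) i) = C2"
        unfolding C2_def by simp
      show ?thesis unfolding cochain_act_def t s ..
    qed
    show ?thesis unfolding ys L d_len2 R1 R2 by (simp add: algebra_simps)
  qed
qed

lemma Xg_coch:
  assumes n0: "n > 0" and X: "X \<in> sl_alg n" and g: "g \<in> cochains n (gl_alg n) n 1"
    and aE: "alt E" and sE: "\<And>xs. E xs \<noteq> 0 \<Longrightarrow> length xs = n \<and> (\<forall>x\<in>set xs. x < n)"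
    and DEq: "\<And>a ys. Dg n g a ys = E (a # ys)"
  shows "cochain_act n X g \<in> cochains n (sl_alg n) n 1"
proof -
  have Xg: "X \<in> gl_alg n" using X unfolding sl_alg_def by auto
  have gP: "g ys \<in> Pgl n n" for ys by (rule coch1_gl_val[OF g n0])
  define M where "M = (\<lambda>a b. X [a] b)"
  have form: "cochain_act n X g [q] zs i = (\<Sum>a<n. g [q] zs a * X [a] i) - Af n M (\<lambda>r. g [q] r i) zs - (\<Sum>b<n. X [q] b * g [b] zs i)" for q zs i
    unfolding cochain_act_def tens_act_Af M_def by simp
  have zero: "cochain_act n X g ys = (\<lambda>_ _. 0)" if "length ys \<noteq> 1" for ys
  proof -
    have z: "g zs = (\<lambda>_ _. 0)" if "length zs = length ys" for zs
      using coch1_zero[OF g n0] \<open>length ys \<noteq> 1\<close> that by simp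
    show ?thesis unfolding cochain_act_def using z[of ys] z[of "ys[_ := _]"] by (intro ext) (simp add: tens_act_zero)
  qed
  show ?thesis
  proof (rule coch1I[OF n0])
    fix ys xs i assume nz: "cochain_act n X g ys xs i \<noteq> 0"
    then have l: "length ys = 1" using zero by fastforce
    then obtain q where ys: "ys = [q]" by (cases ys) auto
    have "q < n"
    proof (rule ccontr)
      assume "\<not> q < n"
      then have "g [q] = (\<lambda>_ _. 0)" using coch1D(1)[OF g n0, of "[q]"] by (intro ext) force
      moreover have "X [q] b = 0" for b using glD[OF Xg, of q b] \<open>\<not> q < n\<close> by auto
      ultimately have "cochain_act n X g [q] xs i = 0" unfolding cochain_act_def by (simp add: tens_act_zero)
      then show False using nz ys by simp
    qed
    then show "length ys = 1 \<and> (\<forall>y\<in>set ys. y < n)" using ys by simp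
  next
    fix ys
    show "cochain_act n X g ys \<in> prolong n (sl_alg n) n" unfolding prolong_sl_eq[OF n0]
    proof (cases "length ys = 1")
      case False then show "cochain_act n X g ys \<in> Psl n n" using zero zero_Psl by simp
    next
      case True
      then obtain q where ys: "ys = [q]" by (cases ys) auto
      have e: "cochain_act n X g [q] = (\<lambda>xs i. tens_act n X (g [q]) xs i + (-1) * (\<Sum>b<n. X [q] b * g [b] xs i))"
        unfolding cochain_act_def by (intro ext) simp
      have P: "cochain_act n X g [q] \<in> Pgl n n" unfolding e
        by (rule Pgl_lin[OF tens_act_Pgl[OF Xg gP] Pgl_sum[OF gP]])
      show "cochain_act n X g ys \<in> Psl n n" unfolding ys
      proof (rule PslI[OF P])
        fix zs
        define S1 where "S1 = (\<Sum>i<n. \<Sum>a<n. g [q] (i # zs) a * X [a] i)"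
        define S2 where "S2 = (\<Sum>i<n. \<Sum>b<n. M i b * g [q] (b # zs) i)"
        define S3 where "S3 = (\<Sum>i<n. Af n M (\<lambda>r. g [q] (i # r) i) zs)"
        define S4 where "S4 = (\<Sum>i<n. \<Sum>b<n. X [q] b * g [b] (i # zs) i)"
        have tot: "(\<Sum>i<n. cochain_act n X g [q] (i # zs) i) = S1 - (S2 + S3) - S4"
          unfolding form Af_Cons S1_def S2_def S3_def S4_def by (simp add: sum_subtractf sum.distrib)
        have s12: "S1 = S2" unfolding S1_def S2_def M_def
          by (subst sum.swap) (simp add: mult.commute)
        have s3: "S3 = Af n M (\<lambda>r. E (q # r)) zs"
        proof -
          have "S3 = Af n M (\<lambda>r. \<Sum>i<n. g [q] (i # r) i) zs" unfolding S3_def by (rule Af_sum)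
          also have "\<dots> = Af n M (\<lambda>r. E (q # r)) zs" by (rule Af_cong) (simp add: DEq[symmetric] Dg_def)
          finally show ?thesis .
        qed
        have s4: "S4 = (\<Sum>b<n. M q b * E (b # zs))"
        proof -
          have "S4 = (\<Sum>b<n. \<Sum>i<n. X [q] b * g [b] (i # zs) i)" unfolding S4_def by (rule sum.swap)
          also have "\<dots> = (\<Sum>b<n. X [q] b * Dg n g b zs)" unfolding Dg_def by (simp add: sum_distrib_left)
          finally show ?thesis unfolding DEq M_def .
        qed
        have "Af n M E (q # zs) = 0" unfolding M_def by (rule AfE0[OF X aE sE])
        then have "S4 + S3 = 0" unfolding s3 s4 Af_Cons by (simp add: add.commute)
        moreover have "S2 - (S2 + S3) - S4 = - (S4 + S3)" by (simp add: algebra_simps)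
        ultimately show "(\<Sum>i<n. cochain_act n X g [q] (i # zs) i) = 0" unfolding tot s12 by simp
      qed
    qed
  qed
qed

lemma triv: assumes n: "n > 1" shows "spencer_H_trivial n (sl_alg n) n 2"
  unfolding spencer_H_trivial_def
proof (intro ballI)
  fix X w assume X: "X \<in> sl_alg n" and w: "w \<in> cocycles n (sl_alg n) n 2"
  have n0: "n > 0" using n by simp
  define g where "g = hom2 n w"
  have g: "g \<in> cochains n (gl_alg n) n 1" and dg: "spencer_d g = w"
    and dv: "\<And>a b ys. (\<Sum>i<n. spencer_d g [a, b] (i # ys) i) = 0"
    unfolding g_def using cocycle_data[OF n0 w] by auto
  define E where "E = Eg n n g"
  have aE: "alt E" unfolding E_def by (rule DE(1)[OF n0 g dv])
  have sE: "\<And>xs. E xs \<noteq> 0 \<Longrightarrow> length xs = n \<and> (\<forall>x\<in>set xs. x < n)" unfolding E_def by (rule DE(2)[OF n0 g dv])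
  have DEq: "\<And>a ys. Dg n g a ys = E (a # ys)" unfolding E_def by (rule DE(3)[OF n0 g dv])
  have gs: "length ys = 1" if "g ys xs i \<noteq> 0" for ys xs i using coch1D(1)[OF g n0 that] by blast
  have "cochain_act n X w = spencer_d (cochain_act n X g)" unfolding dg[symmetric] by (rule equiv[OF gs])
  moreover have "cochain_act n X g \<in> cochains n (sl_alg n) n 1" by (rule Xg_coch[OF n0 X g aE sE DEq])
  ultimately show "cochain_act n X w \<in> coboundaries n (sl_alg n) n 2"
    unfolding coboundaries_def by simp
qed

theorem theorem2p1:
  fixes n :: nat
  assumes "n > 1"
  shows "(\<forall>k>0. spencer_H_zero n (gl_alg n) k 2)
       \<and> (\<forall>k>0. k \<noteq> n \<longrightarrow> spencer_H_zero n (sl_alg n) k 2)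
       \<and> spencer_H_dim1 n (sl_alg n) n 2
       \<and> spencer_H_trivial n (sl_alg n) n 2
       \<and> spencer_parity n 2 = n mod 2"
proof (intro conjI allI impI)
  fix k :: nat assume k: "k > 0"
  show "spencer_H_zero n (gl_alg n) k 2" unfolding spencer_H_zero_def
  proof
    fix f assume f: "f \<in> cocycles n (gl_alg n) k 2"
    have fc: "f \<in> cochains n (gl_alg n) k 2" and df: "spencer_d f = (\<lambda>_ _ _. 0)"
      using f unfolding cocycles_def by auto
    have P: "f ys \<in> Pgl n (k - 1)" for ys
    proof (cases "k = 1")
      case True
      have "prolong n (gl_alg n) (k - 1) = Pgl n 0" using True prolong0[of n "gl_alg n"] by (simp del: prolong.simps)
      then show ?thesis using coch2D(2)[OF fc k] True by simp
    next
      case False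
      then show ?thesis using coch2D(2)[OF fc k] prolong_gl_eq[of "k - 1" n] k by simp
    qed
    have "spencer_d (hom2 k f) = f" by (rule H2(2)[OF k fc df P])
    moreover have "hom2 k f \<in> cochains n (gl_alg n) k 1" by (rule H2(1)[OF k fc df P])
    ultimately show "f \<in> coboundaries n (gl_alg n) k 2" unfolding coboundaries_def by force
  qed
next
  fix k :: nat assume k: "k > 0" and kn: "k \<noteq> n"
  show "spencer_H_zero n (sl_alg n) k 2" unfolding spencer_H_zero_def
  proof
    fix w assume w: "w \<in> cocycles n (sl_alg n) k 2"
    have "hom2 k w \<in> cochains n (gl_alg n) k 1" "spencer_d (hom2 k w) = w"
      "\<And>a b ys. (\<Sum>i<n. spencer_d (hom2 k w) [a, b] (i # ys) i) = 0"
      using cocycle_data[OF k w] by auto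
    then show "w \<in> coboundaries n (sl_alg n) k 2" using slfix[OF k kn] by metis
  qed
next
  show "spencer_H_dim1 n (sl_alg n) n 2" by (rule dim1[OF assms])
next
  show "spencer_H_trivial n (sl_alg n) n 2" by (rule triv[OF assms])
next
  show "spencer_parity n 2 = n mod 2" using assms unfolding spencer_parity_def by simp
qed



end
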